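(* Let $(a_n)_{n\ge 1}$ be a sequence of strictly positive real numbers with $\sum_{n\ge1}(1+n^2)^5a_n^2<\infty$. Let $H=\mathbb{R}\times l^2\times l^2$ and let $F:H\to H$ be defined, for $y=(x,(u_n)_{n\ge1},(v_n)_{n\ge1})\in H$, by $$F(y)=\Big(\sum_{n\ge1} n a_n^{1/2}\big(\sin(nx)u_n+\cos(nx)v_n\big),\ \big(a_n^{1/2}\cos(nx)\big)_{n\ge1},\ \big(-a_n^{1/2}\sin(nx)\big)_{n\ge1}\Big).$$ Let $W$ be a cylindrical Wiener process on $H$ and $\sigma$ the projection onto the first coordinate, so that $\sigma W_t=(\beta_t,0,0)$ with $\beta$ a standard one-dimensional Brownian motion. Then for each $y\in H$ there is a unique (analytically) strong solution $$Y\in C([0,\infty);H)\cap L^\infty_{loc}(0,\infty;H)$$ of the equation $dY_t=F(Y_t)\,dt+\sigma\,dW_t$, $Y_0=y$. Moreover, for every $T<\infty$, $$\mathbb{E}\Big(\sup_{t\in[0,T]}\|Y_t\|_H^2\Big)<\infty.$$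
   Context: $H=\mathbb{R}\times l^2\times l^2$ is the Hilbert space with norm $\|y\|_H^2=|x|^2+\|(u_n)_n\|_{l^2}^2+\|(v_n)_n\|_{l^2}^2$ for $y=(x,(u_n)_n,(v_n)_n)$. The equation written in components reads $X_t=x+\int_0^t\sum_n n a_n^{1/2}(\sin(nX_s)u^n_s+\cos(nX_s)v^n_s)ds+\beta_t$, $u^n_t=u^n_0+a_n^{1/2}\int_0^t\cos(nX_s)ds$, $v^n_t=v^n_0-a_n^{1/2}\int_0^t\sin(nX_s)ds$, $n\ge1$. $L^\infty_{loc}(0,\infty;H)$ denotes the functions $(0,\infty)\to H$ which are locally essentially bounded. *)

theory Defs
  imports "HOL-Probability.Probability"
begin

text \<open>Points of H = R x l2 x l2. Sequences (u_n)_{n>=1} are represented by functions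
  nat => real whose value at 0 is forced to be 0 (index 0 is unused).\<close>
type_synonym Hpt = "real \<times> (nat \<Rightarrow> real) \<times> (nat \<Rightarrow> real)"

definition inH :: "Hpt \<Rightarrow> bool" where
  "inH y \<longleftrightarrow> (case y of (x, u, v) \<Rightarrow>
      u 0 = 0 \<and> v 0 = 0 \<and> summable (\<lambda>n. (u n)^2) \<and> summable (\<lambda>n. (v n)^2))"

definition Hnorm :: "Hpt \<Rightarrow> real" where
  "Hnorm y = (case y of (x, u, v) \<Rightarrow> sqrt (x^2 + (\<Sum>n. (u n)^2) + (\<Sum>n. (v n)^2)))"

definition Hdiff :: "Hpt \<Rightarrow> Hpt \<Rightarrow> Hpt" where
  "Hdiff y z = (fst y - fst z, \<lambda>n. fst (snd y) n - fst (snd z) n,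
                \<lambda>n. snd (snd y) n - snd (snd z) n)"

definition Fdrift :: "(nat \<Rightarrow> real) \<Rightarrow> Hpt \<Rightarrow> Hpt" where
  "Fdrift a y = (case y of (x, u, v) \<Rightarrow>
     ((\<Sum>n. real n * sqrt (a n) * (sin (real n * x) * u n + cos (real n * x) * v n)),
      (\<lambda>n. if n = 0 then 0 else sqrt (a n) * cos (real n * x)),
      (\<lambda>n. if n = 0 then 0 else - sqrt (a n) * sin (real n * x))))"

definition std_BM :: "'w measure \<Rightarrow> (real \<Rightarrow> 'w \<Rightarrow> real) \<Rightarrow> bool" where
  "std_BM M B \<longleftrightarrow> prob_space M
     \<and> (\<forall>t\<ge>0. B t \<in> borel_measurable M)
     \<and> (\<forall>\<omega>\<in>space M. B 0 \<omega> = 0 \<and> continuous_on {0..} (\<lambda>t. B t \<omega>))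
     \<and> (\<forall>s t. 0 \<le> s \<and> s < t \<longrightarrow>
          distributed M lborel (\<lambda>\<omega>. B t \<omega> - B s \<omega>)
             (\<lambda>x. ennreal (normal_density 0 (sqrt (t - s)) x)))
     \<and> (\<forall>ts. sorted_wrt (<) ts \<and> (\<forall>t\<in>set ts. 0 \<le> t) \<longrightarrow>
          prob_space.indep_vars M (\<lambda>_. borel)
            (\<lambda>i \<omega>. B (ts ! Suc i) \<omega> - B (ts ! i) \<omega>) {..<length ts - 1})"

definition BM_filt :: "'w measure \<Rightarrow> (real \<Rightarrow> 'w \<Rightarrow> real) \<Rightarrow> real \<Rightarrow> 'w measure" where
  "BM_filt M B t = sigma (space M)
     (\<Union>s\<in>{0..t}. {B s -` A \<inter> space M | A. A \<in> sets borel})"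

definition H_adapted :: "'w measure \<Rightarrow> (real \<Rightarrow> 'w \<Rightarrow> real) \<Rightarrow> (real \<Rightarrow> 'w \<Rightarrow> Hpt) \<Rightarrow> bool" where
  "H_adapted M B Y \<longleftrightarrow> (\<forall>t\<ge>0.
      (\<lambda>\<omega>. fst (Y t \<omega>)) \<in> borel_measurable (BM_filt M B t)
    \<and> (\<forall>n. (\<lambda>\<omega>. fst (snd (Y t \<omega>)) n) \<in> borel_measurable (BM_filt M B t))
    \<and> (\<forall>n. (\<lambda>\<omega>. snd (snd (Y t \<omega>)) n) \<in> borel_measurable (BM_filt M B t)))"

text \<open>Pathwise: the path Y (for driving path b) lies in C([0,oo);H) \<inter> L^oo_loc and solves
  Y_t = y + int_0^t F(Y_s) ds + (b_t,0,0), componentwise.\<close>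
definition is_solution :: "(nat \<Rightarrow> real) \<Rightarrow> (real \<Rightarrow> real) \<Rightarrow> Hpt \<Rightarrow> (real \<Rightarrow> Hpt) \<Rightarrow> bool" where
  "is_solution a b y Y \<longleftrightarrow>
      (\<forall>t\<ge>0. inH (Y t))
    \<and> (\<forall>t\<ge>0. \<forall>\<epsilon>>0. \<exists>\<delta>>0. \<forall>s\<ge>0. \<bar>s - t\<bar> < \<delta> \<longrightarrow> Hnorm (Hdiff (Y s) (Y t)) < \<epsilon>)
    \<and> (\<forall>T. \<exists>C. \<forall>t\<in>{0..T}. Hnorm (Y t) \<le> C)
    \<and> (\<forall>t\<ge>0. ((\<lambda>s. fst (Fdrift a (Y s))) has_integral (fst (Y t) - fst y - b t)) {0..t})
    \<and> (\<forall>t\<ge>0. \<forall>n. ((\<lambda>s. fst (snd (Fdrift a (Y s))) n)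
                     has_integral (fst (snd (Y t)) n - fst (snd y) n)) {0..t})
    \<and> (\<forall>t\<ge>0. \<forall>n. ((\<lambda>s. snd (snd (Fdrift a (Y s))) n)
                     has_integral (snd (snd (Y t)) n - snd (snd y) n)) {0..t})"

end

theory Submission
  imports Defs
begin


lemma sin_lip: fixes x y :: real shows "\<bar>sin x - sin y\<bar> \<le> \<bar>x - y\<bar>"
proof -
  have "\<bar>sin x - sin y\<bar> = 2 * \<bar>sin ((x - y) / 2)\<bar> * \<bar>cos ((x + y) / 2)\<bar>"
    by (simp add: sin_diff_sin abs_mult)
  also have "\<dots> \<le> 2 * \<bar>(x - y) / 2\<bar> * 1"
    by (intro mult_mono abs_sin_x_le_abs_x) auto
  finally show ?thesis by simp
qed

lemma cos_lip: fixes x y :: real shows "\<bar>cos x - cos y\<bar> \<le> \<bar>x - y\<bar>"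
  using sin_lip[of "x + pi/2" "y + pi/2"] by (simp add: sin_add)

lemma series_lip:
  fixes f :: "nat \<Rightarrow> real \<Rightarrow> real"
  assumes c: "summable c" and b: "\<And>n z. \<bar>f n z\<bar> \<le> c n"
    and l: "\<And>n z w. \<bar>f n z - f n w\<bar> \<le> c n * \<bar>z - w\<bar>"
  shows "\<bar>(\<Sum>n. f n z)\<bar> \<le> suminf c" "\<bar>(\<Sum>n. f n z) - (\<Sum>n. f n w)\<bar> \<le> suminf c * \<bar>z - w\<bar>"
    "summable (\<lambda>n. f n z)"
proof -
  have s: "summable (\<lambda>n. f n z)" for z
    by (rule summable_rabs_cancel, rule summable_comparison_test[OF _ c]) (use b in auto)
  show "summable (\<lambda>n. f n z)" by (rule s)
  have sa: "summable (\<lambda>n. \<bar>f n z\<bar>)" for z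
    by (rule summable_comparison_test[OF _ c]) (use b in auto)
  show "\<bar>(\<Sum>n. f n z)\<bar> \<le> suminf c"
    using summable_rabs[OF sa[of z]] suminf_le[of "\<lambda>n. \<bar>f n z\<bar>" c, OF b sa c] by linarith
  have "(\<Sum>n. f n z) - (\<Sum>n. f n w) = (\<Sum>n. f n z - f n w)"
    using suminf_diff[OF s s] by simp
  also have "\<bar>\<dots>\<bar> \<le> (\<Sum>n. c n * \<bar>z - w\<bar>)"
  proof -
    have sd: "summable (\<lambda>n. \<bar>f n z - f n w\<bar>)"
      by (rule summable_comparison_test[OF _ summable_mult2[OF c, of "\<bar>z-w\<bar>"]]) (use l in auto)
    show ?thesis using summable_rabs[OF sd] suminf_le[of "\<lambda>n. \<bar>f n z - f n w\<bar>", OF l sd summable_mult2[OF c]] by linarith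
  qed
  also have "\<dots> = suminf c * \<bar>z - w\<bar>" by (rule suminf_mult2[OF c, symmetric])
  finally show "\<bar>(\<Sum>n. f n z) - (\<Sum>n. f n w)\<bar> \<le> suminf c * \<bar>z - w\<bar>" .
qed

locale sysp =
  fixes a :: "nat \<Rightarrow> real" and x0 :: real and u0 v0 :: "nat \<Rightarrow> real"
  assumes apos: "\<forall>n\<ge>1. a n > 0"
  and asum: "summable (\<lambda>n. (1 + (real n)^2)^5 * (a n)^2)"
  and u00: "u0 0 = 0" and v00: "v0 0 = 0"
  and usum: "summable (\<lambda>n. (u0 n)^2)" and vsum: "summable (\<lambda>n. (v0 n)^2)"
begin

lemma S4: "summable (\<lambda>n. real n ^ 4 * \<bar>a n\<bar>)"
proof -
  have bnd: "real n ^ 4 * \<bar>a n\<bar> \<le> ((1 + (real n)^2)^5 * (a n)^2 + inverse (real n ^ 2)) / 2" for n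
  proof -
    define w where "w = (1 + (real n)^2)^5"
    define m where "m = real n ^ 4"
    have wp: "w > 0" unfolding w_def by (simp add: add_pos_nonneg)
    have "0 \<le> (w * \<bar>a n\<bar> - m)^2" by simp
    hence "2 * (m * \<bar>a n\<bar>) * w \<le> w * (a n)^2 * w + m^2"
      by (simp add: power2_eq_square algebra_simps)
    moreover have "m^2 = real n ^ 8" unfolding m_def by (simp flip: power_mult)
    ultimately have "2 * (m * \<bar>a n\<bar>) * w \<le> w * (a n)^2 * w + real n ^ 8" by simp
    hence h1: "2 * (m * \<bar>a n\<bar>) \<le> w * (a n)^2 + real n ^ 8 / w"
      using wp by (simp add: field_simps)
    have h2: "real n ^ 8 / w \<le> inverse (real n ^ 2)"
    proof (cases "n = 0")
      case False
      have "(real n ^ 2) ^ 5 \<le> w" unfolding w_def by (rule power_mono) auto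
      hence "real n ^ 8 * real n ^ 2 \<le> w" by (simp flip: power_mult power_add)
      thus ?thesis using wp False by (simp add: field_simps)
    qed simp
    show ?thesis using h1 h2 unfolding w_def m_def by simp
  qed
  have "summable (\<lambda>n. ((1 + (real n)^2)^5 * (a n)^2 + inverse (real n ^ 2)) / 2)"
    by (intro summable_divide summable_add asum inverse_power_summable) simp
  thus ?thesis by (rule summable_comparison_test[rotated]) (use bnd in auto)
qed

definition "cc n = real n ^ 2 * \<bar>sqrt (a n)\<bar> * (\<bar>u0 n\<bar> + \<bar>v0 n\<bar>)"
definition "dd n = real n ^ 2 * \<bar>a n\<bar>"

lemma sqa: "\<bar>sqrt (a n)\<bar>^2 = \<bar>a n\<bar>"
  by (metis power2_abs power2_eq_square real_sqrt_mult_self)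

lemma cc_sum: "summable cc"
proof -
  have "cc n \<le> real n ^ 4 * \<bar>a n\<bar> + (u0 n)^2 + (v0 n)^2" for n
  proof -
    have "0 \<le> (real n ^ 2 * \<bar>sqrt (a n)\<bar> - \<bar>u0 n\<bar>)^2" "0 \<le> (real n ^ 2 * \<bar>sqrt (a n)\<bar> - \<bar>v0 n\<bar>)^2" by simp_all
    hence "2 * (real n ^ 2 * \<bar>sqrt (a n)\<bar> * \<bar>u0 n\<bar>) \<le> (real n^2)^2 * \<bar>sqrt (a n)\<bar>^2 + (u0 n)^2"
      "2 * (real n ^ 2 * \<bar>sqrt (a n)\<bar> * \<bar>v0 n\<bar>) \<le> (real n^2)^2 * \<bar>sqrt (a n)\<bar>^2 + (v0 n)^2"
      by (simp_all add: power2_eq_square algebra_simps)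
    thus ?thesis unfolding cc_def sqa
      by (simp add: power_mult[symmetric] algebra_simps) (use zero_le_power2[of "u0 n"] zero_le_power2[of "v0 n"] in linarith)
  qed
  moreover have "cc n \<ge> 0" for n unfolding cc_def by simp
  ultimately show ?thesis
    by (intro summable_comparison_test[OF _ summable_add[OF summable_add[OF S4 usum] vsum]]) auto
qed

lemma dd_sum: "summable dd"
proof -
  have "dd n \<le> real n ^ 4 * \<bar>a n\<bar>" for n
  proof (cases "n = 0")
    case False
    hence "real n ^ 2 \<le> real n ^ 4" by (intro power_increasing) auto
    thus ?thesis unfolding dd_def by (intro mult_right_mono) auto
  qed (simp add: dd_def)
  thus ?thesis by (intro summable_comparison_test[OF _ S4]) (auto simp: dd_def)
qed

definition "phi z = (\<Sum>n. real n * sqrt (a n) * (u0 n * sin (real n * z) + v0 n * cos (real n * z)))"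
definition "psi z = (\<Sum>n. real n * a n * sin (real n * z))"
definition "K0 = suminf cc + suminf dd + 1"

lemma K0_pos: "K0 > 0"
proof -
  have "suminf cc \<ge> 0" by (rule suminf_nonneg[OF cc_sum]) (simp add: cc_def)
  moreover have "suminf dd \<ge> 0" by (rule suminf_nonneg[OF dd_sum]) (simp add: dd_def)
  ultimately show ?thesis unfolding K0_def by simp
qed

lemma nle: "real n \<le> real n ^ 2" by (cases n) (auto simp: power2_eq_square)

lemma phi_terms:
  "\<bar>real n * sqrt (a n) * (u0 n * sin (real n * z) + v0 n * cos (real n * z))\<bar> \<le> cc n"
  "\<bar>real n * sqrt (a n) * (u0 n * sin (real n * z) + v0 n * cos (real n * z))
    - real n * sqrt (a n) * (u0 n * sin (real n * w) + v0 n * cos (real n * w))\<bar> \<le> cc n * \<bar>z - w\<bar>"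
proof -
  have "\<bar>u0 n * sin (real n * z) + v0 n * cos (real n * z)\<bar> \<le> \<bar>u0 n\<bar> + \<bar>v0 n\<bar>"
  proof -
    have "\<bar>u0 n * sin (real n * z)\<bar> \<le> \<bar>u0 n\<bar>" "\<bar>v0 n * cos (real n * z)\<bar> \<le> \<bar>v0 n\<bar>"
      by (simp_all add: abs_mult mult_left_le)
    thus ?thesis using abs_triangle_ineq[of "u0 n * sin (real n * z)" "v0 n * cos (real n * z)"] by linarith
  qed
  hence "\<bar>real n * sqrt (a n) * (u0 n * sin (real n * z) + v0 n * cos (real n * z))\<bar>
     \<le> real n * \<bar>sqrt (a n)\<bar> * (\<bar>u0 n\<bar> + \<bar>v0 n\<bar>)"
    by (simp add: abs_mult mult_left_mono)
  also have "\<dots> \<le> cc n" unfolding cc_def by (intro mult_right_mono nle) auto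
  finally show "\<bar>real n * sqrt (a n) * (u0 n * sin (real n * z) + v0 n * cos (real n * z))\<bar> \<le> cc n" .
  have d: "\<bar>(u0 n * sin (real n * z) + v0 n * cos (real n * z)) - (u0 n * sin (real n * w) + v0 n * cos (real n * w))\<bar>
      \<le> (\<bar>u0 n\<bar> + \<bar>v0 n\<bar>) * (real n * \<bar>z - w\<bar>)"
  proof -
    have "\<bar>sin (real n * z) - sin (real n * w)\<bar> \<le> real n * \<bar>z - w\<bar>"
      using sin_lip[of "real n * z" "real n * w"] by (simp add: right_diff_distrib[symmetric] abs_mult)
    moreover have "\<bar>cos (real n * z) - cos (real n * w)\<bar> \<le> real n * \<bar>z - w\<bar>"
      using cos_lip[of "real n * z" "real n * w"] by (simp add: right_diff_distrib[symmetric] abs_mult)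
    ultimately have "\<bar>u0 n\<bar> * \<bar>sin (real n * z) - sin (real n * w)\<bar> + \<bar>v0 n\<bar> * \<bar>cos (real n * z) - cos (real n * w)\<bar>
        \<le> (\<bar>u0 n\<bar> + \<bar>v0 n\<bar>) * (real n * \<bar>z - w\<bar>)"
      by (simp add: distrib_right mult_left_mono add_mono)
    moreover have "\<bar>(u0 n * sin (real n * z) + v0 n * cos (real n * z)) - (u0 n * sin (real n * w) + v0 n * cos (real n * w))\<bar>
      \<le> \<bar>u0 n\<bar> * \<bar>sin (real n * z) - sin (real n * w)\<bar> + \<bar>v0 n\<bar> * \<bar>cos (real n * z) - cos (real n * w)\<bar>"
    proof -
      have "(u0 n * sin (real n * z) + v0 n * cos (real n * z)) - (u0 n * sin (real n * w) + v0 n * cos (real n * w))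
         = u0 n * (sin (real n * z) - sin (real n * w)) + v0 n * (cos (real n * z) - cos (real n * w))"
        by (simp add: algebra_simps)
      thus ?thesis using abs_triangle_ineq[of "u0 n * (sin (real n * z) - sin (real n * w))" "v0 n * (cos (real n * z) - cos (real n * w))"]
        by (simp add: abs_mult)
    qed
    ultimately show ?thesis by linarith
  qed
  have "\<bar>real n * sqrt (a n) * (u0 n * sin (real n * z) + v0 n * cos (real n * z))
    - real n * sqrt (a n) * (u0 n * sin (real n * w) + v0 n * cos (real n * w))\<bar>
    = real n * \<bar>sqrt (a n)\<bar> * \<bar>(u0 n * sin (real n * z) + v0 n * cos (real n * z)) - (u0 n * sin (real n * w) + v0 n * cos (real n * w))\<bar>"
    by (simp add: right_diff_distrib[symmetric] abs_mult)
  also have "\<dots> \<le> real n * \<bar>sqrt (a n)\<bar> * ((\<bar>u0 n\<bar> + \<bar>v0 n\<bar>) * (real n * \<bar>z - w\<bar>))"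
    by (intro mult_left_mono d) auto
  also have "\<dots> = cc n * \<bar>z - w\<bar>" unfolding cc_def by (simp add: power2_eq_square)
  finally show "\<bar>real n * sqrt (a n) * (u0 n * sin (real n * z) + v0 n * cos (real n * z))
    - real n * sqrt (a n) * (u0 n * sin (real n * w) + v0 n * cos (real n * w))\<bar> \<le> cc n * \<bar>z - w\<bar>" .
qed

lemma psi_terms:
  "\<bar>real n * a n * sin (real n * z)\<bar> \<le> dd n"
  "\<bar>real n * a n * sin (real n * z) - real n * a n * sin (real n * w)\<bar> \<le> dd n * \<bar>z - w\<bar>"
proof -
  have "\<bar>real n * a n * sin (real n * z)\<bar> \<le> real n * \<bar>a n\<bar>"
    using abs_sin_le_one[of "real n * z"] by (simp add: abs_mult mult_left_le)
  also have "\<dots> \<le> dd n" unfolding dd_def by (intro mult_right_mono nle) auto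
  finally show "\<bar>real n * a n * sin (real n * z)\<bar> \<le> dd n" .
  have "\<bar>real n * a n * sin (real n * z) - real n * a n * sin (real n * w)\<bar>
     = real n * \<bar>a n\<bar> * \<bar>sin (real n * z) - sin (real n * w)\<bar>"
    by (simp add: right_diff_distrib[symmetric] abs_mult)
  also have "\<dots> \<le> real n * \<bar>a n\<bar> * (real n * \<bar>z - w\<bar>)"
    using sin_lip[of "real n * z" "real n * w"]
    by (intro mult_left_mono) (auto simp: right_diff_distrib[symmetric] abs_mult)
  also have "\<dots> = dd n * \<bar>z - w\<bar>" unfolding dd_def by (simp add: power2_eq_square)
  finally show "\<bar>real n * a n * sin (real n * z) - real n * a n * sin (real n * w)\<bar> \<le> dd n * \<bar>z - w\<bar>" .
qed

lemma phi_bnd: "\<bar>phi z\<bar> \<le> K0" and phi_lip: "\<bar>phi z - phi w\<bar> \<le> K0 * \<bar>z - w\<bar>"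
proof -
  note L = series_lip[OF cc_sum phi_terms(1) phi_terms(2)]
  have "suminf dd \<ge> 0" by (rule suminf_nonneg[OF dd_sum]) (simp add: dd_def)
  hence le: "suminf cc \<le> K0" unfolding K0_def by simp
  show "\<bar>phi z\<bar> \<le> K0" using L(1)[of z] le unfolding phi_def by linarith
  show "\<bar>phi z - phi w\<bar> \<le> K0 * \<bar>z - w\<bar>"
    using L(2)[of z w] mult_right_mono[OF le, of "\<bar>z - w\<bar>"] unfolding phi_def by linarith
qed

lemma psi_bnd: "\<bar>psi z\<bar> \<le> K0" and psi_lip: "\<bar>psi z - psi w\<bar> \<le> K0 * \<bar>z - w\<bar>"
proof -
  note L = series_lip[OF dd_sum psi_terms(1) psi_terms(2)]
  have "suminf cc \<ge> 0" by (rule suminf_nonneg[OF cc_sum]) (simp add: cc_def)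
  hence le: "suminf dd \<le> K0" unfolding K0_def by simp
  show "\<bar>psi z\<bar> \<le> K0" using L(1)[of z] le unfolding psi_def by linarith
  show "\<bar>psi z - psi w\<bar> \<le> K0 * \<bar>z - w\<bar>"
    using L(2)[of z w] mult_right_mono[OF le, of "\<bar>z - w\<bar>"] unfolding psi_def by linarith
qed

lemma lip_cont: assumes "\<And>z w. \<bar>f z - f w\<bar> \<le> K0 * \<bar>z - w\<bar>" shows "continuous_on S (f :: real \<Rightarrow> real)"
proof -
  have "continuous_on UNIV f"
    unfolding continuous_on_iff
  proof (intro ballI allI impI)
    fix x and e :: real assume "e > 0"
    show "\<exists>d>0. \<forall>x'\<in>UNIV. dist x' x < d \<longrightarrow> dist (f x') (f x) < e"
    proof (intro exI[of _ "e / K0"] conjI ballI impI)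
      show "e / K0 > 0" using \<open>e > 0\<close> K0_pos by simp
      fix x' assume "dist x' x < e / K0"
      hence "K0 * \<bar>x' - x\<bar> < e" using K0_pos by (simp add: dist_real_def field_simps)
      thus "dist (f x') (f x) < e" using assms[of x' x] by (simp add: dist_real_def)
    qed
  qed
  thus ?thesis by (rule continuous_on_subset) simp
qed

lemma phi_cont: "continuous_on S phi" by (rule lip_cont[OF phi_lip])
lemma psi_cont: "continuous_on S psi" by (rule lip_cont[OF psi_lip])

end


lemma cont_from_est:
  fixes h X :: "real \<Rightarrow> real"
  assumes X: "continuous_on S X" and C: "C \<ge> 0" and D: "D \<ge> 0"
    and est: "\<And>s s'. s \<in> S \<Longrightarrow> s' \<in> S \<Longrightarrow> \<bar>h s' - h s\<bar> \<le> C * \<bar>X s' - X s\<bar> + D * \<bar>s' - s\<bar>"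
  shows "continuous_on S h"
  unfolding continuous_on_iff
proof (intro ballI allI impI)
  fix s and e :: real assume s: "s \<in> S" and e: "e > 0"
  obtain d1 where d1: "d1 > 0" "\<And>s'. s' \<in> S \<Longrightarrow> dist s' s < d1 \<Longrightarrow> dist (X s') (X s) < e / (2 * (C + 1))"
  proof -
    have "e / (2 * (C + 1)) > 0" using e C by simp
    thus ?thesis using X s that unfolding continuous_on_iff by blast
  qed
  show "\<exists>d>0. \<forall>s'\<in>S. dist s' s < d \<longrightarrow> dist (h s') (h s) < e"
  proof (intro exI[of _ "min d1 (e / (2 * (D + 1)))"] conjI ballI impI)
    show "min d1 (e / (2 * (D + 1))) > 0" using d1 e D by simp
    fix s' assume s': "s' \<in> S" and ds: "dist s' s < min d1 (e / (2 * (D + 1)))"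
    have "\<bar>X s' - X s\<bar> < e / (2 * (C + 1))" using d1(2)[OF s'] ds by (simp add: dist_real_def)
    hence "C * \<bar>X s' - X s\<bar> \<le> C * (e / (2 * (C + 1)))" using C by (intro mult_left_mono) auto
    also have "\<dots> \<le> e / 2" using C e by (simp add: field_simps)
    finally have 1: "C * \<bar>X s' - X s\<bar> \<le> e / 2" .
    have "\<bar>s' - s\<bar> < e / (2 * (D + 1))" using ds by (simp add: dist_real_def)
    hence "D * \<bar>s' - s\<bar> \<le> D * (e / (2 * (D + 1)))" using D by (intro mult_left_mono) auto
    also have "\<dots> < e / 2" using D e by (simp add: field_simps)
    finally have 2: "D * \<bar>s' - s\<bar> < e / 2" .
    show "dist (h s') (h s) < e" using est[OF s s'] 1 2 by (simp add: dist_real_def)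
  qed
qed

context sysp begin

definition G :: "(real \<Rightarrow> real) \<Rightarrow> real \<Rightarrow> real" where "G X s = phi (X s) + integral {0..s} (\<lambda>r. psi (X s - X r))"

lemma psi_comp: "continuous_on A f \<Longrightarrow> continuous_on A (\<lambda>r. psi (f r))"
  using continuous_on_compose2[OF psi_cont[of UNIV], of A f] by simp
lemma phi_comp: "continuous_on A f \<Longrightarrow> continuous_on A (\<lambda>r. phi (f r))"
  using continuous_on_compose2[OF phi_cont[of UNIV], of A f] by simp

lemma psi_int_cont: "continuous_on A X \<Longrightarrow> continuous_on A (\<lambda>r. psi (X s - X r))"
  by (intro psi_comp continuous_intros)

lemma G_bnd: assumes "s \<ge> 0" "continuous_on {0..s} X" shows "\<bar>G X s\<bar> \<le> K0 * (1 + s)"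
proof -
  have "norm (integral {0..s} (\<lambda>r. psi (X s - X r))) \<le> K0 * (s - 0)"
    by (rule integral_bound) (use assms psi_int_cont psi_bnd in auto)
  thus ?thesis unfolding G_def using phi_bnd[of "X s"] by (simp add: algebra_simps)
qed

lemma G_lip:
  assumes s: "s \<ge> 0" and c1: "continuous_on {0..s} X1" and c2: "continuous_on {0..s} X2"
    and e: "\<And>r. r \<in> {0..s} \<Longrightarrow> \<bar>X1 r - X2 r\<bar> \<le> e"
  shows "\<bar>G X1 s - G X2 s\<bar> \<le> K0 * (1 + 2 * s) * e"
proof -
  have e0: "e \<ge> 0" using e[of 0] s by force
  have i1: "(\<lambda>r. psi (X1 s - X1 r)) integrable_on {0..s}"
    by (rule integrable_continuous_real) (rule psi_int_cont[OF c1])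
  have i2: "(\<lambda>r. psi (X2 s - X2 r)) integrable_on {0..s}"
    by (rule integrable_continuous_real) (rule psi_int_cont[OF c2])
  have "norm (integral {0..s} (\<lambda>r. psi (X1 s - X1 r) - psi (X2 s - X2 r))) \<le> (K0 * (2 * e)) * (s - 0)"
  proof (rule integral_bound)
    show "continuous_on {0..s} (\<lambda>r. psi (X1 s - X1 r) - psi (X2 s - X2 r))"
      by (intro continuous_intros psi_int_cont c1 c2)
    fix r assume r: "r \<in> {0..s}"
    have "\<bar>psi (X1 s - X1 r) - psi (X2 s - X2 r)\<bar> \<le> K0 * \<bar>(X1 s - X1 r) - (X2 s - X2 r)\<bar>" by (rule psi_lip)
    also have "\<bar>(X1 s - X1 r) - (X2 s - X2 r)\<bar> \<le> 2 * e"
      using e[of s] e[OF r] s by (auto simp: abs_le_iff)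
    hence "K0 * \<bar>(X1 s - X1 r) - (X2 s - X2 r)\<bar> \<le> K0 * (2 * e)" using K0_pos by simp
    finally show "norm (psi (X1 s - X1 r) - psi (X2 s - X2 r)) \<le> K0 * (2 * e)" by simp
  qed (use s in auto)
  hence 1: "\<bar>integral {0..s} (\<lambda>r. psi (X1 s - X1 r)) - integral {0..s} (\<lambda>r. psi (X2 s - X2 r))\<bar> \<le> K0 * (2 * e) * s"
    using integral_diff[OF i1 i2] by simp
  have 2: "\<bar>phi (X1 s) - phi (X2 s)\<bar> \<le> K0 * e"
  proof -
    have "K0 * \<bar>X1 s - X2 s\<bar> \<le> K0 * e" using e[of s] s K0_pos by (intro mult_left_mono) auto
    thus ?thesis using phi_lip[of "X1 s" "X2 s"] by linarith
  qed
  show ?thesis using 1 2 unfolding G_def by (simp add: algebra_simps)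
qed

lemma G_cont: fixes T :: real assumes T: "T \<ge> 0" and X: "continuous_on {0..T} X" shows "continuous_on {0..T} (G X)"
proof -
  define h where "h s = integral {0..s} (\<lambda>r. psi (X s - X r))" for s
  have est1: "\<bar>h s' - h s\<bar> \<le> (K0 * T) * \<bar>X s' - X s\<bar> + K0 * \<bar>s' - s\<bar>"
    if "s \<in> {0..T}" "s' \<in> {0..T}" "s \<le> s'" for s s'
  proof -
    have Xs': "continuous_on {0..s'} X" using X that by (auto intro: continuous_on_subset)
    have Xs: "continuous_on {0..s} X" using X that by (auto intro: continuous_on_subset)
    have "h s' = integral {0..s} (\<lambda>r. psi (X s' - X r)) + integral {s..s'} (\<lambda>r. psi (X s' - X r))"
      unfolding h_def
      by (rule Henstock_Kurzweil_Integration.integral_combine[symmetric])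
         (use that in \<open>auto intro!: integrable_continuous_real psi_int_cont Xs'\<close>)
    moreover have "integral {0..s} (\<lambda>r. psi (X s' - X r)) - h s =
        integral {0..s} (\<lambda>r. psi (X s' - X r) - psi (X s - X r))"
      unfolding h_def
      by (rule integral_diff[symmetric]) (auto intro!: integrable_continuous_real psi_int_cont Xs)
    moreover have "\<bar>integral {0..s} (\<lambda>r. psi (X s' - X r) - psi (X s - X r))\<bar> \<le> (K0 * \<bar>X s' - X s\<bar>) * (s - 0)"
    proof -
      have "norm (integral {0..s} (\<lambda>r. psi (X s' - X r) - psi (X s - X r))) \<le> (K0 * \<bar>X s' - X s\<bar>) * (s - 0)"
      proof (rule integral_bound)
        fix r show "norm (psi (X s' - X r) - psi (X s - X r)) \<le> K0 * \<bar>X s' - X s\<bar>"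
          using psi_lip[of "X s' - X r" "X s - X r"] by simp
      qed (use that in \<open>auto intro!: continuous_intros psi_int_cont Xs\<close>)
      thus ?thesis by simp
    qed
    moreover have "\<bar>integral {s..s'} (\<lambda>r. psi (X s' - X r))\<bar> \<le> K0 * (s' - s)"
    proof -
      have "continuous_on {s..s'} X" using X that by (auto intro: continuous_on_subset)
      hence "norm (integral {s..s'} (\<lambda>r. psi (X s' - X r))) \<le> K0 * (s' - s)"
        by (intro integral_bound) (use that psi_bnd in \<open>auto intro!: psi_int_cont\<close>)
      thus ?thesis by simp
    qed
    moreover have "(K0 * \<bar>X s' - X s\<bar>) * s \<le> (K0 * T) * \<bar>X s' - X s\<bar>"
      using that K0_pos by (simp add: mult_left_mono mult_right_mono mult.commute mult.left_commute)
    ultimately show ?thesis using that by (simp add: abs_le_iff)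
  qed
  have est: "\<bar>h s' - h s\<bar> \<le> (K0 * T) * \<bar>X s' - X s\<bar> + K0 * \<bar>s' - s\<bar>"
    if "s \<in> {0..T}" "s' \<in> {0..T}" for s s'
  proof (cases "s \<le> s'")
    case True thus ?thesis using est1 that by blast
  next
    case False
    hence "\<bar>h s - h s'\<bar> \<le> (K0 * T) * \<bar>X s - X s'\<bar> + K0 * \<bar>s - s'\<bar>" using est1 that by auto
    thus ?thesis by (simp add: abs_minus_commute)
  qed
  have "continuous_on {0..T} h" by (rule cont_from_est[OF X _ _ est]) (use T K0_pos in auto)
  moreover have "continuous_on {0..T} (\<lambda>s. phi (X s))" by (rule phi_comp[OF X])
  ultimately have "continuous_on {0..T} (\<lambda>s. phi (X s) + h s)" by (intro continuous_intros)
  thus ?thesis unfolding G_def h_def by simp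
qed

end


lemma pow_int:
  fixes K m t :: real
  assumes K: "K > 0" and t: "t \<ge> 0"
  shows "((\<lambda>s. K * m * (K * s) ^ k / fact k) has_integral m * (K * t) ^ Suc k / fact (Suc k)) {0..t}"
proof -
  define C where "C = m * K ^ Suc k / fact (Suc k)"
  have "((\<lambda>s. K * m * (K * s) ^ k / fact k) has_integral C * t ^ Suc k - C * 0 ^ Suc k) {0..t}"
  proof (rule fundamental_theorem_of_calculus[OF t])
    fix s :: real assume "s \<in> {0..t}"
    have "((\<lambda>s. C * s ^ Suc k) has_real_derivative C * (real (Suc k) * s ^ (Suc k - Suc 0))) (at s within {0..t})"
      by (intro DERIV_cmult DERIV_pow)
    moreover have "C * (real (Suc k) * s ^ (Suc k - Suc 0)) = K * m * (K * s) ^ k / fact k"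
      unfolding C_def by (simp add: fact_Suc power_mult_distrib field_simps del: of_nat_Suc)
    ultimately show "((\<lambda>s. C * s ^ Suc k) has_vector_derivative K * m * (K * s) ^ k / fact k)
        (at s within {0..t})"
      by (simp add: has_real_derivative_iff_has_vector_derivative)
  qed
  moreover have "C * t ^ Suc k - C * 0 ^ Suc k = m * (K * t) ^ Suc k / fact (Suc k)"
    unfolding C_def by (simp add: power_mult_distrib)
  ultimately show ?thesis by simp
qed

context sysp begin

definition "KT T = K0 * (1 + 2 * T)"

lemma KT_pos: "T \<ge> 0 \<Longrightarrow> KT T > 0" unfolding KT_def using K0_pos by (simp add: add_pos_nonneg)

lemma gstep:
  fixes T m :: real
  assumes T: "T \<ge> 0" and c1: "continuous_on {0..T} X1" and c2: "continuous_on {0..T} X2"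
    and m: "m \<ge> 0"
    and b: "\<And>r. r \<in> {0..T} \<Longrightarrow> \<bar>X1 r - X2 r\<bar> \<le> m * (KT T * r) ^ k / fact k"
    and t: "t \<in> {0..T}"
  shows "\<bar>integral {0..t} (\<lambda>s. G X1 s - G X2 s)\<bar> \<le> m * (KT T * t) ^ Suc k / fact (Suc k)"
proof -
  have t0: "t \<ge> 0" "t \<le> T" using t by auto
  have c1t: "continuous_on {0..t} X1" and c2t: "continuous_on {0..t} X2"
    using c1 c2 t0 by (auto intro: continuous_on_subset)
  have "norm (integral {0..t} (\<lambda>s. G X1 s - G X2 s)) \<le> integral {0..t} (\<lambda>s. KT T * m * (KT T * s) ^ k / fact k)"
  proof (rule integral_norm_bound_integral)
    show "(\<lambda>s. G X1 s - G X2 s) integrable_on {0..t}"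
      by (rule integrable_continuous_real, rule continuous_on_diff; rule G_cont) (use c1t c2t t0 in auto)
    show "(\<lambda>s. KT T * m * (KT T * s) ^ k / fact k) integrable_on {0..t}"
      using pow_int[OF KT_pos[OF T] t0(1)] by blast
    fix s assume s: "s \<in> {0..t}"
    have c1s: "continuous_on {0..s} X1" and c2s: "continuous_on {0..s} X2"
      using c1 c2 s t0 by (auto intro: continuous_on_subset)
    have e: "\<bar>X1 r - X2 r\<bar> \<le> m * (KT T * s) ^ k / fact k" if "r \<in> {0..s}" for r
    proof -
      have "\<bar>X1 r - X2 r\<bar> \<le> m * (KT T * r) ^ k / fact k" by (rule b) (use that s t0 in simp)
      also have "\<dots> \<le> m * (KT T * s) ^ k / fact k"
        proof -
        have "KT T * r \<le> KT T * s" using that KT_pos[OF T] by (intro mult_left_mono) auto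
        hence "(KT T * r) ^ k \<le> (KT T * s) ^ k" using that KT_pos[OF T] by (intro power_mono) auto
        thus ?thesis using m by (intro divide_right_mono mult_left_mono) auto
      qed
      finally show ?thesis .
    qed
    have "\<bar>G X1 s - G X2 s\<bar> \<le> K0 * (1 + 2 * s) * (m * (KT T * s) ^ k / fact k)"
      by (rule G_lip[OF _ c1s c2s e]) (use s in auto)
    also have "\<dots> \<le> KT T * (m * (KT T * s) ^ k / fact k)"
      unfolding KT_def using s t0 K0_pos m KT_pos[OF T]
      by (intro mult_right_mono) auto
    finally show "norm (G X1 s - G X2 s) \<le> KT T * m * (KT T * s) ^ k / fact k" by simp
  qed
  also have "\<dots> = m * (KT T * t) ^ Suc k / fact (Suc k)"
    by (rule integral_unique[OF pow_int[OF KT_pos[OF T] t0(1)]])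
  finally show ?thesis by simp
qed

lemma fact_pow_lim: "(\<lambda>k. m * (c::real) ^ k / fact k) \<longlonglongrightarrow> 0"
proof -
  have "(\<lambda>k. inverse (fact k) * c ^ k) \<longlonglongrightarrow> 0" by (rule summable_LIMSEQ_zero[OF summable_exp])
  hence "(\<lambda>k. m * (inverse (fact k) * c ^ k)) \<longlonglongrightarrow> m * 0" by (intro tendsto_mult tendsto_const)
  moreover have "(\<lambda>k. m * (inverse (fact k) * c ^ k)) = (\<lambda>k. m * c ^ k / fact k)"
    by (simp add: divide_inverse mult.commute mult.left_commute)
  ultimately show ?thesis by simp
qed

lemma X_unique:
  assumes c1: "\<And>T. continuous_on {0..T} X1" and c2: "\<And>T. continuous_on {0..T} X2"
    and i1: "\<And>t. t \<ge> 0 \<Longrightarrow> (G X1 has_integral (X1 t - c t)) {0..t}"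
    and i2: "\<And>t. t \<ge> 0 \<Longrightarrow> (G X2 has_integral (X2 t - c t)) {0..t}"
    and t: "t \<ge> 0"
  shows "X1 t = X2 t"
proof -
  define T where "T = t"
  have T: "T \<ge> 0" using t T_def by simp
  have "continuous_on {0..T} (\<lambda>r. X1 r - X2 r)" by (rule continuous_on_diff[OF c1 c2])
  hence "compact ((\<lambda>r. X1 r - X2 r) ` {0..T})"
    by (rule compact_continuous_image) (rule compact_Icc)
  hence "bounded ((\<lambda>r. X1 r - X2 r) ` {0..T})" by (rule compact_imp_bounded)
  then obtain m where m0: "\<forall>x\<in>(\<lambda>r. X1 r - X2 r) ` {0..T}. norm x \<le> m"
    unfolding bounded_iff by (elim exE)
  have m: "\<bar>X1 r - X2 r\<bar> \<le> m" if "r \<in> {0..T}" for r using bspec[OF m0 imageI[OF that]] by simp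
  have m0: "m \<ge> 0" using m[of 0] T by simp
  have ind: "\<forall>r\<in>{0..T}. \<bar>X1 r - X2 r\<bar> \<le> m * (KT T * r) ^ k / fact k" for k
  proof (induction k)
    case 0 thus ?case using m by simp
  next
    case (Suc k)
    show ?case
    proof
      fix r assume r: "r \<in> {0..T}"
      have r0: "r \<ge> 0" using r by simp
      have "X1 r - X2 r = integral {0..r} (G X1) - integral {0..r} (G X2)"
        using integral_unique[OF i1[OF r0]] integral_unique[OF i2[OF r0]] by simp
      also have "\<dots> = integral {0..r} (\<lambda>s. G X1 s - G X2 s)"
        by (rule integral_diff[symmetric]) (use has_integral_integrable[OF i1[OF r0]] has_integral_integrable[OF i2[OF r0]] in auto)
      finally have eqr: "X1 r - X2 r = integral {0..r} (\<lambda>s. G X1 s - G X2 s)" .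
      have "\<bar>integral {0..r} (\<lambda>s. G X1 s - G X2 s)\<bar> \<le> m * (KT T * r) ^ Suc k / fact (Suc k)"
        by (rule gstep[OF T c1 c2 m0 _ r]) (use Suc.IH in blast)
      thus "\<bar>X1 r - X2 r\<bar> \<le> m * (KT T * r) ^ Suc k / fact (Suc k)" unfolding eqr .
    qed
  qed
  have "(\<lambda>k. m * (KT T * t) ^ k / fact k) \<longlonglongrightarrow> 0" by (rule fact_pow_lim)
  moreover have "\<bar>X1 t - X2 t\<bar> \<le> m * (KT T * t) ^ k / fact k" for k using ind[of k] T T_def by auto
  ultimately have "\<bar>X1 t - X2 t\<bar> \<le> 0"
    by (intro LIMSEQ_le_const) blast+
  thus ?thesis by simp
qed

end


context sysp begin

primrec Pic :: "(real \<Rightarrow> real) \<Rightarrow> nat \<Rightarrow> real \<Rightarrow> real" where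
  "Pic b 0 = (\<lambda>t. x0 + b t)"
| "Pic b (Suc k) = (\<lambda>t. x0 + b t + integral {0..t} (G (Pic b k)))"

definition "Xs b t = lim (\<lambda>k. Pic b k t)"

definition "MT T = K0 * T * (1 + T)"

lemma cont_neg: "T < (0::real) \<Longrightarrow> continuous_on {0..T} f" by simp

lemma Pic_cont:
  assumes bc: "\<And>T. continuous_on {0..T} b"
  shows "continuous_on {0..T} (Pic b k)"
proof (induction k arbitrary: T)
  case 0 show ?case by (simp, intro continuous_intros bc)
next
  case (Suc k)
  show ?case
  proof (cases "T \<ge> 0")
    case True
    have "continuous_on {0..T} (\<lambda>t. integral {0..t} (G (Pic b k)))"
      by (rule indefinite_integral_continuous_1, rule integrable_continuous_real, rule G_cont[OF True Suc.IH])
    thus ?thesis by (simp, intro continuous_intros bc)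
  qed simp
qed

lemma Pic_diff:
  assumes bc: "\<And>T. continuous_on {0..T} b" and T: "T \<ge> 0"
  shows "t \<in> {0..T} \<Longrightarrow> \<bar>Pic b (Suc k) t - Pic b k t\<bar> \<le> MT T * (KT T * t) ^ k / fact k"
proof (induction k arbitrary: t)
  case 0
  hence t: "t \<ge> 0" "t \<le> T" by auto
  have c0: "continuous_on {0..t} (Pic b 0)" by (rule Pic_cont[OF bc])
  have "norm (integral {0..t} (G (Pic b 0))) \<le> (K0 * (1 + t)) * (t - 0)"
  proof (rule integral_bound)
    show "continuous_on {0..t} (G (Pic b 0))" by (rule G_cont[OF t(1) c0])
    fix s assume s: "s \<in> {0..t}"
    have "\<bar>G (Pic b 0) s\<bar> \<le> K0 * (1 + s)"
    proof (rule G_bnd)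
      show "continuous_on {0..s} (Pic b 0)" by (rule Pic_cont[OF bc])
    qed (use s in auto)
    also have "\<dots> \<le> K0 * (1 + t)" using s K0_pos by (intro mult_left_mono) auto
    finally show "norm (G (Pic b 0) s) \<le> K0 * (1 + t)" by simp
  qed (use t in auto)
  also have "\<dots> \<le> MT T" unfolding MT_def using t K0_pos
  proof -
    have "(1 + t) * t \<le> (1 + T) * T" using t by (intro mult_mono) auto
    thus "K0 * (1 + t) * (t - 0) \<le> K0 * T * (1 + T)" using K0_pos
      by (simp add: mult.assoc mult_left_mono mult.commute)
  qed
  finally show ?case by simp
next
  case (Suc k)
  have t: "t \<ge> 0" "t \<le> T" using Suc.prems by auto
  have c: "continuous_on {0..t} (Pic b j)" for j by (rule Pic_cont[OF bc])
  have m: "MT T \<ge> 0" unfolding MT_def using T K0_pos by simp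
  have "Pic b (Suc (Suc k)) t - Pic b (Suc k) t = integral {0..t} (G (Pic b (Suc k))) - integral {0..t} (G (Pic b k))"
    by simp
  also have "\<dots> = integral {0..t} (\<lambda>s. G (Pic b (Suc k)) s - G (Pic b k) s)"
    by (rule integral_diff[symmetric]; rule integrable_continuous_real; rule G_cont[OF t(1) c])
  finally have eq: "Pic b (Suc (Suc k)) t - Pic b (Suc k) t = integral {0..t} (\<lambda>s. G (Pic b (Suc k)) s - G (Pic b k) s)" .
  have "\<bar>integral {0..t} (\<lambda>s. G (Pic b (Suc k)) s - G (Pic b k) s)\<bar> \<le> MT T * (KT T * t) ^ Suc k / fact (Suc k)"
    by (rule gstep[OF T Pic_cont[OF bc] Pic_cont[OF bc] m]) (use Suc.IH Suc.prems in auto)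
  thus ?case unfolding eq .
qed

lemma Pic_bound:
  assumes bc: "\<And>T. continuous_on {0..T} b" and T: "T \<ge> 0" and t: "t \<in> {0..T}"
  shows "norm (Pic b (Suc k) t - Pic b k t) \<le> MT T * inverse (fact k) * (KT T * T) ^ k"
proof -
  have "\<bar>Pic b (Suc k) t - Pic b k t\<bar> \<le> MT T * (KT T * t) ^ k / fact k" by (rule Pic_diff[OF bc T t])
  also have "\<dots> \<le> MT T * (KT T * T) ^ k / fact k"
  proof -
    have "KT T * t \<le> KT T * T" using t KT_pos[OF T] by (intro mult_left_mono) auto
    hence "(KT T * t) ^ k \<le> (KT T * T) ^ k" using t KT_pos[OF T] by (intro power_mono) auto
    moreover have "MT T \<ge> 0" unfolding MT_def using T K0_pos by simp
    ultimately show ?thesis by (intro divide_right_mono mult_left_mono) auto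
  qed
  finally show ?thesis by (simp add: divide_inverse mult.commute mult.left_commute)
qed

lemma Bsum: "summable (\<lambda>k. MT T * inverse (fact k) * (KT T * T) ^ k)"
  using summable_mult[OF summable_exp[of "KT T * T"], of "MT T"] by (simp add: mult.assoc)

lemma Pic_tel: "Pic b n t = Pic b 0 t + (\<Sum>j<n. Pic b (Suc j) t - Pic b j t)"
proof -
  have eq: "(\<Sum>j<n. Pic b (Suc j) t - Pic b j t) = Pic b n t - Pic b 0 t"
    by (rule sum_lessThan_telescope)
  show ?thesis by (simp only: eq)
qed

lemma Pic_lim:
  assumes bc: "\<And>T. continuous_on {0..T} b" and t: "t \<ge> 0"
  shows "(\<lambda>k. Pic b k t) \<longlonglongrightarrow> Xs b t"
    "Xs b t = Pic b 0 t + (\<Sum>j. Pic b (Suc j) t - Pic b j t)"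
proof -
  have s: "summable (\<lambda>j. Pic b (Suc j) t - Pic b j t)"
    by (rule summable_norm_cancel, rule summable_comparison_test'[OF Bsum[of t]])
       (use Pic_bound[OF bc t, of t] t in auto)
  have "(\<lambda>n. Pic b 0 t + (\<Sum>j<n. Pic b (Suc j) t - Pic b j t)) \<longlonglongrightarrow> Pic b 0 t + (\<Sum>j. Pic b (Suc j) t - Pic b j t)"
    by (intro tendsto_add tendsto_const summable_LIMSEQ s)
  hence L: "(\<lambda>k. Pic b k t) \<longlonglongrightarrow> Pic b 0 t + (\<Sum>j. Pic b (Suc j) t - Pic b j t)"
    by (simp only: Pic_tel[symmetric])
  thus "Xs b t = Pic b 0 t + (\<Sum>j. Pic b (Suc j) t - Pic b j t)" unfolding Xs_def by (rule limI)
  thus "(\<lambda>k. Pic b k t) \<longlonglongrightarrow> Xs b t" using L by simp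
qed

lemma Pic_unif:
  assumes bc: "\<And>T. continuous_on {0..T} b" and T: "T \<ge> 0"
  shows "uniform_limit {0..T} (Pic b) (Xs b) sequentially"
proof -
  have W: "uniform_limit {0..T} (\<lambda>n t. \<Sum>j<n. Pic b (Suc j) t - Pic b j t) (\<lambda>t. \<Sum>j. Pic b (Suc j) t - Pic b j t) sequentially"
    by (rule Weierstrass_m_test[OF _ Bsum]) (rule Pic_bound[OF bc T])
  show ?thesis unfolding uniform_limit_iff
  proof (intro allI impI)
    fix e :: real assume e: "e > 0"
    have "\<forall>\<^sub>F n in sequentially. \<forall>t\<in>{0..T}. dist (\<Sum>j<n. Pic b (Suc j) t - Pic b j t) (\<Sum>j. Pic b (Suc j) t - Pic b j t) < e"
      using W e unfolding uniform_limit_iff by blast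
    thus "\<forall>\<^sub>F n in sequentially. \<forall>t\<in>{0..T}. dist (Pic b n t) (Xs b t) < e"
    proof (rule eventually_mono)
      fix n assume H: "\<forall>t\<in>{0..T}. dist (\<Sum>j<n. Pic b (Suc j) t - Pic b j t) (\<Sum>j. Pic b (Suc j) t - Pic b j t) < e"
      show "\<forall>t\<in>{0..T}. dist (Pic b n t) (Xs b t) < e"
      proof
        fix t assume t: "t \<in> {0..T}"
        have "dist (Pic b n t) (Xs b t) = dist (\<Sum>j<n. Pic b (Suc j) t - Pic b j t) (\<Sum>j. Pic b (Suc j) t - Pic b j t)"
          using Pic_lim(2)[OF bc, of t] t Pic_tel[of b n t] by (simp add: dist_real_def)
        thus "dist (Pic b n t) (Xs b t) < e" using H t by simp
      qed
    qed
  qed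
qed

lemma Xs_cont:
  assumes bc: "\<And>T. continuous_on {0..T} b"
  shows "continuous_on {0..T} (Xs b)"
proof (cases "T \<ge> 0")
  case True
  show ?thesis
    by (rule uniform_limit_theorem[OF _ Pic_unif[OF bc True]]) (intro always_eventually allI Pic_cont[OF bc], simp)
qed simp

lemma Xs_fix:
  assumes bc: "\<And>T. continuous_on {0..T} b" and t: "t \<ge> 0"
  shows "(G (Xs b) has_integral (Xs b t - x0 - b t)) {0..t}"
proof -
  have U: "uniform_limit {0..t} (\<lambda>k. G (Pic b k)) (G (Xs b)) sequentially"
    unfolding uniform_limit_iff
  proof (intro allI impI)
    fix e :: real assume e: "e > 0"
    define e' where "e' = e / (2 * KT t)"
    have e': "e' > 0" unfolding e'_def using e KT_pos[OF t] by simp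
    have "\<forall>\<^sub>F n in sequentially. \<forall>s\<in>{0..t}. dist (Pic b n s) (Xs b s) < e'"
      using Pic_unif[OF bc t] e' unfolding uniform_limit_iff by blast
    thus "\<forall>\<^sub>F n in sequentially. \<forall>s\<in>{0..t}. dist (G (Pic b n) s) (G (Xs b) s) < e"
    proof (rule eventually_mono)
      fix n assume H: "\<forall>s\<in>{0..t}. dist (Pic b n s) (Xs b s) < e'"
      show "\<forall>s\<in>{0..t}. dist (G (Pic b n) s) (G (Xs b) s) < e"
      proof
        fix s assume s: "s \<in> {0..t}"
        have "\<bar>G (Pic b n) s - G (Xs b) s\<bar> \<le> K0 * (1 + 2 * s) * e'"
        proof (rule G_lip)
          show "continuous_on {0..s} (Pic b n)" by (rule Pic_cont[OF bc])
          show "continuous_on {0..s} (Xs b)" by (rule Xs_cont[OF bc])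
          fix r assume r: "r \<in> {0..s}"
          hence "r \<in> {0..t}" using s by auto
          from bspec[OF H this] show "\<bar>Pic b n r - Xs b r\<bar> \<le> e'" by (simp add: dist_real_def)
        qed (use s in auto)
        also have "\<dots> \<le> KT t * e'" unfolding KT_def using s K0_pos e'
          by (intro mult_right_mono mult_left_mono) auto
        also have "\<dots> < e" unfolding e'_def using KT_pos[OF t] e by (simp add: field_simps)
        finally show "dist (G (Pic b n) s) (G (Xs b) s) < e" by (simp add: dist_real_def)
      qed
    qed
  qed
  obtain I J where I: "\<And>n. (G (Pic b n) has_integral I n) {0..t}" and J: "(G (Xs b) has_integral J) {0..t}"
    and IJ: "I \<longlonglongrightarrow> J"
    using uniform_limit_integral[OF U] G_cont[OF t Pic_cont[OF bc]] by (metis trivial_limit_sequentially)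
  have "(\<lambda>n. x0 + b t + I n) \<longlonglongrightarrow> x0 + b t + J" by (intro tendsto_add tendsto_const IJ)
  moreover have "(\<lambda>n. x0 + b t + I n) = (\<lambda>n. Pic b (Suc n) t)"
    by (rule ext) (simp add: integral_unique[OF I])
  moreover have "(\<lambda>n. Pic b (Suc n) t) \<longlonglongrightarrow> Xs b t" by (rule LIMSEQ_Suc[OF Pic_lim(1)[OF bc t]])
  ultimately have "Xs b t = x0 + b t + J" using LIMSEQ_unique by metis
  thus ?thesis using J by simp
qed

end


lemma int_diff_bnd:
  fixes f :: "real \<Rightarrow> real"
  assumes c: "continuous_on {0..max s t} f" and b: "\<And>x. \<bar>f x\<bar> \<le> 1" and s: "s \<ge> 0" and t: "t \<ge> 0"
  shows "\<bar>integral {0..t} f - integral {0..s} f\<bar> \<le> \<bar>t - s\<bar>"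
proof -
  have main: "\<bar>integral {0..q} f - integral {0..p} f\<bar> \<le> q - p"
    if "0 \<le> p" "p \<le> q" "continuous_on {0..q} f" for p q
  proof -
    have "integral {0..p} f + integral {p..q} f = integral {0..q} f"
      by (rule Henstock_Kurzweil_Integration.integral_combine) (use that in \<open>auto intro: integrable_continuous_real\<close>)
    moreover have "norm (integral {p..q} f) \<le> 1 * (q - p)"
      by (rule integral_bound) (use that b in \<open>auto intro: continuous_on_subset\<close>)
    ultimately show ?thesis by simp
  qed
  show ?thesis
  proof (cases "s \<le> t")
    case True
    thus ?thesis using main[of s t] c s by (simp add: max_def)
  next
    case False
    thus ?thesis using main[of t s] c t by (simp add: max_def abs_minus_commute)
  qed
qed

context sysp begin

definition Wc :: "(nat \<Rightarrow> real) \<Rightarrow> (real \<Rightarrow> real) \<Rightarrow> (real \<Rightarrow> real) \<Rightarrow> real \<Rightarrow> nat \<Rightarrow> real" where "Wc c g X t n = c n + (if n = 0 then 0 else sqrt (a n) * integral {0..t} (\<lambda>r. g (real n * X r)))"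
definition Sol :: "(real \<Rightarrow> real) \<Rightarrow> real \<Rightarrow> Hpt" where "Sol X t = (X t, Wc u0 cos X t, Wc v0 (\<lambda>z. - sin z) X t)"
definition "e4 n = real n ^ 4 * \<bar>a n\<bar>"

lemma term_eq:
  assumes s: "s \<ge> 0" and X: "continuous_on {0..s} X"
  shows "real n * sqrt (a n) * (sin (real n * X s) * Wc u0 cos X s n + cos (real n * X s) * Wc v0 (\<lambda>z. - sin z) X s n)
    = real n * sqrt (a n) * (u0 n * sin (real n * X s) + v0 n * cos (real n * X s))
      + integral {0..s} (\<lambda>r. real n * a n * sin (real n * (X s - X r)))"
proof (cases "n = 0")
  case True thus ?thesis by simp
next
  case False
  have ap: "a n > 0" using apos False by simp
  have sa: "sqrt (a n) * sqrt (a n) = a n" using ap by simp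
  define C where "C = integral {0..s} (\<lambda>r. cos (real n * X r))"
  define S where "S = integral {0..s} (\<lambda>r. - sin (real n * X r))"
  have cc: "continuous_on {0..s} (\<lambda>r. cos (real n * X r))" "continuous_on {0..s} (\<lambda>r. - sin (real n * X r))"
    by (intro continuous_intros X)+
  have hC: "((\<lambda>r. cos (real n * X r)) has_integral C) {0..s}"
    unfolding C_def has_integral_integral[symmetric] by (rule integrable_continuous_real[OF cc(1)])
  have hS: "((\<lambda>r. - sin (real n * X r)) has_integral S) {0..s}"
    unfolding S_def has_integral_integral[symmetric] by (rule integrable_continuous_real[OF cc(2)])
  have "((\<lambda>r. real n * a n * (sin (real n * X s) * cos (real n * X r) + cos (real n * X s) * (- sin (real n * X r))))
     has_integral real n * a n * (sin (real n * X s) * C + cos (real n * X s) * S)) {0..s}"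
    by (intro has_integral_mult_right has_integral_add hC hS)
  moreover have "(\<lambda>r. real n * a n * (sin (real n * X s) * cos (real n * X r) + cos (real n * X s) * (- sin (real n * X r))))
      = (\<lambda>r. real n * a n * sin (real n * (X s - X r)))"
    by (rule ext) (simp add: right_diff_distrib sin_diff)
  ultimately have I: "integral {0..s} (\<lambda>r. real n * a n * sin (real n * (X s - X r)))
      = real n * a n * (sin (real n * X s) * C + cos (real n * X s) * S)"
    using integral_unique by metis
  have W1: "Wc u0 cos X s n = u0 n + sqrt (a n) * C" unfolding Wc_def C_def using False by simp
  have W2: "Wc v0 (\<lambda>z. - sin z) X s n = v0 n + sqrt (a n) * S" unfolding Wc_def S_def using False by simp
  show ?thesis unfolding W1 W2 I
    using ap by (simp add: algebra_simps) (simp add: mult.assoc[symmetric] sa)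
qed

lemma KI:
  assumes s: "s \<ge> 0" and X: "continuous_on {0..s} X"
  shows "fst (Fdrift a (Sol X s)) = G X s"
proof -
  define g where "g n r = real n * a n * sin (real n * (X s - X r))" for n r
  define J where "J n = integral {0..s} (g n)" for n
  have gc: "continuous_on {0..s} (g n)" for n unfolding g_def by (intro continuous_intros X)
  have W: "uniform_limit {0..s} (\<lambda>N r. \<Sum>n<N. g n r) (\<lambda>r. \<Sum>n. g n r) sequentially"
    by (rule Weierstrass_m_test[OF _ dd_sum]) (use psi_terms(1) in \<open>simp add: g_def\<close>)
  obtain I L where I: "\<And>N. ((\<lambda>r. \<Sum>n<N. g n r) has_integral I N) {0..s}"
    and L: "((\<lambda>r. \<Sum>n. g n r) has_integral L) {0..s}" and IL: "I \<longlonglongrightarrow> L"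
    using uniform_limit_integral[OF W] gc by (metis continuous_on_sum trivial_limit_sequentially)
  have "I = (\<lambda>N. \<Sum>n<N. J n)"
  proof (rule ext)
    fix N
    have "((\<lambda>r. \<Sum>n<N. g n r) has_integral (\<Sum>n<N. J n)) {0..s}"
      unfolding J_def by (intro has_integral_sum finite_lessThan) (simp add: has_integral_integral[symmetric] integrable_continuous_real gc)
    thus "I N = (\<Sum>n<N. J n)" using I[of N] by (metis has_integral_unique)
  qed
  hence "J sums L" using IL unfolding sums_def by simp
  moreover have "L = integral {0..s} (\<lambda>r. psi (X s - X r))"
    using integral_unique[OF L] unfolding psi_def g_def by simp
  ultimately have Js: "J sums integral {0..s} (\<lambda>r. psi (X s - X r))" by simp
  have ps: "summable (\<lambda>n. real n * sqrt (a n) * (u0 n * sin (real n * X s) + v0 n * cos (real n * X s)))"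
    by (rule series_lip(3)[OF cc_sum phi_terms(1) phi_terms(2)])
  have "fst (Fdrift a (Sol X s)) = (\<Sum>n. real n * sqrt (a n) * (u0 n * sin (real n * X s) + v0 n * cos (real n * X s)) + J n)"
    unfolding Fdrift_def Sol_def J_def g_def using term_eq[OF s X] by simp
  also have "\<dots> = phi (X s) + integral {0..s} (\<lambda>r. psi (X s - X r))"
    using suminf_add[OF ps sums_summable[OF Js]] sums_unique[OF Js] unfolding phi_def by simp
  finally show ?thesis unfolding G_def .
qed

end


lemma sqrt_sum_le: "sqrt (x^2 + y) \<le> \<bar>x\<bar> + sqrt y" if "y \<ge> 0" for x y :: real
proof -
  have "x^2 + y \<le> (\<bar>x\<bar> + sqrt y)^2" using that by (simp add: power2_eq_square algebra_simps)
  hence "sqrt (x^2 + y) \<le> sqrt ((\<bar>x\<bar> + sqrt y)^2)" by (rule real_sqrt_le_mono)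
  thus ?thesis using that by simp
qed

lemma summable_sq_diff: "summable (\<lambda>n. (u n)^2) \<Longrightarrow> summable (\<lambda>n. (v n)^2) \<Longrightarrow> summable (\<lambda>n. (u n - v n :: real)^2)"
proof -
  assume u: "summable (\<lambda>n. (u n)^2)" and v: "summable (\<lambda>n. (v n)^2)"
  have "(u n - v n)^2 \<le> 2 * (u n)^2 + 2 * (v n)^2" for n
    using zero_le_power2[of "u n + v n"] by (simp add: power2_eq_square algebra_simps)
  thus ?thesis by (intro summable_comparison_test[OF _ summable_add[OF summable_mult[OF u] summable_mult[OF v]]]) auto
qed

lemma Hnorm_fst: assumes "inH p" "inH q" shows "\<bar>fst p - fst q\<bar> \<le> Hnorm (Hdiff p q)"
proof -
  obtain x u v where p: "p = (x, u, v)" by (cases p) auto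
  obtain x' u' v' where q: "q = (x', u', v')" by (cases q) auto
  have su: "summable (\<lambda>n. (u n - u' n)^2)" and sv: "summable (\<lambda>n. (v n - v' n)^2)"
    using assms unfolding p q inH_def by (auto intro: summable_sq_diff)
  have "0 \<le> (\<Sum>n. (u n - u' n)^2)" "0 \<le> (\<Sum>n. (v n - v' n)^2)"
    by (rule suminf_nonneg[OF su], simp) (rule suminf_nonneg[OF sv], simp)
  hence "sqrt ((x - x')^2) \<le> sqrt ((x - x')^2 + (\<Sum>n. (u n - u' n)^2) + (\<Sum>n. (v n - v' n)^2))"
    by (intro real_sqrt_le_mono) simp
  thus ?thesis unfolding p q Hnorm_def Hdiff_def by simp
qed

lemma aux_q: fixes q e :: real assumes q: "q \<ge> 0" and e: "e > 0" shows "q * (e / (2 * (q + 1))) \<le> e / 2"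
proof -
  have "q * (e / (2 * (q + 1))) \<le> (q + 1) * (e / (2 * (q + 1)))" by (intro mult_right_mono) (use e q in auto)
  also have "\<dots> = e / 2" using q by (simp add: field_simps)
  finally show ?thesis .
qed

context sysp begin

lemma e4_sum: "summable e4" using S4 unfolding e4_def .
lemma e4_nn: "e4 n \<ge> 0" unfolding e4_def by simp

lemma W_diff:
  assumes s: "s \<ge> 0" and t: "t \<ge> 0" and X: "continuous_on {0..max s t} X"
    and gc: "continuous_on UNIV g" and gb: "\<And>z. \<bar>g z\<bar> \<le> 1"
  shows "(Wc c g X t n - Wc c g X s n)^2 \<le> e4 n * (t - s)^2"
proof (cases "n = 0")
  case True thus ?thesis by (simp add: Wc_def e4_def)
next
  case False
  have c: "continuous_on {0..max s t} (\<lambda>r. g (real n * X r))"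
    by (rule continuous_on_compose2[OF gc, of _ "\<lambda>r. real n * X r"]) (auto intro!: continuous_intros X)
  have d: "\<bar>integral {0..t} (\<lambda>r. g (real n * X r)) - integral {0..s} (\<lambda>r. g (real n * X r))\<bar> \<le> \<bar>t - s\<bar>"
    by (rule int_diff_bnd[OF c gb s t])
  have "(Wc c g X t n - Wc c g X s n)^2 = \<bar>sqrt (a n)\<bar>^2 * (integral {0..t} (\<lambda>r. g (real n * X r)) - integral {0..s} (\<lambda>r. g (real n * X r)))^2"
    unfolding Wc_def using False by (simp add: power_mult_distrib right_diff_distrib[symmetric])
  also have "\<dots> \<le> \<bar>a n\<bar> * (t - s)^2"
    unfolding sqa by (intro mult_left_mono) (use d in \<open>auto simp: abs_le_square_iff\<close>)
  also have "\<dots> \<le> e4 n * (t - s)^2"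
  proof -
    have "1 \<le> real n ^ 4" using False by simp
    hence "\<bar>a n\<bar> \<le> e4 n" unfolding e4_def by (simp add: mult_le_cancel_right1)
    thus ?thesis by (intro mult_right_mono) auto
  qed
  finally show ?thesis .
qed

lemma W_sq:
  assumes t: "t \<ge> 0" and X: "continuous_on {0..t} X"
    and gc: "continuous_on UNIV g" and gb: "\<And>z. \<bar>g z\<bar> \<le> 1"
  shows "(Wc c g X t n)^2 \<le> 2 * (c n)^2 + 2 * (e4 n * t^2)"
proof -
  have "(Wc c g X t n - Wc c g X 0 n)^2 \<le> e4 n * (t - 0)^2"
    by (rule W_diff[OF _ t _ gc gb]) (use X t in \<open>simp_all add: max_def\<close>)
  moreover have "Wc c g X 0 n = c n" unfolding Wc_def by simp
  moreover have "(Wc c g X t n)^2 \<le> 2 * (c n)^2 + 2 * (Wc c g X t n - c n)^2"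
    using zero_le_power2[of "Wc c g X t n - 2 * c n"] by (simp add: power2_eq_square algebra_simps)
  ultimately show ?thesis by simp
qed

lemma W_summable:
  assumes t: "t \<ge> 0" and X: "continuous_on {0..t} X" and cs: "summable (\<lambda>n. (c n)^2)"
    and gc: "continuous_on UNIV g" and gb: "\<And>z. \<bar>g z\<bar> \<le> 1"
  shows "summable (\<lambda>n. (Wc c g X t n)^2)"
  by (rule summable_comparison_test[OF _ summable_add[OF summable_mult[OF cs] summable_mult[OF summable_mult2[OF e4_sum]]]])
     (use W_sq[OF t X gc gb] in auto)

lemma gcos1: "continuous_on UNIV (cos :: real \<Rightarrow> real)" using continuous_on_cos[OF continuous_on_id] by simp
lemma gsin1: "continuous_on UNIV (\<lambda>z::real. - sin z)" by (intro continuous_intros)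
lemma gsin2: "\<bar>- sin (z::real)\<bar> \<le> 1" by simp
lemmas gcos = gcos1 abs_cos_le_one
lemmas gsin = gsin1 gsin2

lemma Sol_inH: assumes "t \<ge> 0" "continuous_on {0..t} X" shows "inH (Sol X t)"
  unfolding inH_def Sol_def using W_summable[OF assms usum gcos] W_summable[OF assms vsum gsin] u00 v00
  by (simp add: Wc_def)

lemma Sol_cont:
  assumes X: "\<And>T. continuous_on {0..T} X" and t: "t \<ge> 0" and e: "e > 0"
  shows "\<exists>d>0. \<forall>s\<ge>0. \<bar>s - t\<bar> < d \<longrightarrow> Hnorm (Hdiff (Sol X s) (Sol X t)) < e"
proof -
  define E where "E = suminf e4"
  have E: "E \<ge> 0" unfolding E_def by (rule suminf_nonneg[OF e4_sum e4_nn])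
  obtain d1 where d1: "d1 > 0" "\<And>s. s \<in> {0..t+1} \<Longrightarrow> dist s t < d1 \<Longrightarrow> dist (X s) (X t) < e / 2"
  proof -
    have "t \<in> {0..t+1}" using t by simp
    moreover have "e / 2 > 0" using e by simp
    ultimately show ?thesis using X[of "t+1"] that unfolding continuous_on_iff by blast
  qed
  define d where "d = min 1 (min d1 (e / (2 * (sqrt (2 * E) + 1))))"
  have "sqrt (2 * E) \<ge> 0" using E by simp
  hence "sqrt (2 * E) + 1 > 0" by linarith
  hence "2 * (sqrt (2 * E) + 1) > 0" by simp
  hence d: "d > 0" unfolding d_def using d1 e by simp
  show ?thesis
  proof (intro exI[of _ d] conjI allI impI d)
    fix s :: real assume s: "s \<ge> 0" and ds: "\<bar>s - t\<bar> < d"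
    have st: "s \<in> {0..t+1}" using s ds unfolding d_def by auto
    have Xst: "continuous_on {0..max s t} X" by (rule X)
    have bnd: "(Wc c g X s n - Wc c g X t n)^2 \<le> e4 n * (s - t)^2"
      if "continuous_on UNIV g" "\<And>z. \<bar>g z\<bar> \<le> 1" for c g n
      by (rule W_diff[OF t s _ that]) (simp add: max.commute X)
    have sm: "summable (\<lambda>n. e4 n * (s - t)^2)" by (rule summable_mult2[OF e4_sum])
    have S1: "(\<Sum>n. (Wc u0 cos X s n - Wc u0 cos X t n)^2) \<le> E * (s - t)^2"
      unfolding E_def using suminf_le[OF bnd[OF gcos] summable_comparison_test[OF _ sm] sm] bnd[OF gcos]
        suminf_mult2[OF e4_sum] by auto
    have S2: "(\<Sum>n. (Wc v0 (\<lambda>z. - sin z) X s n - Wc v0 (\<lambda>z. - sin z) X t n)^2) \<le> E * (s - t)^2"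
      unfolding E_def using suminf_le[OF bnd[OF gsin] summable_comparison_test[OF _ sm] sm] bnd[OF gsin]
        suminf_mult2[OF e4_sum] by auto
    have N1: "0 \<le> (\<Sum>n. (Wc u0 cos X s n - Wc u0 cos X t n)^2)"
      by (rule suminf_nonneg[OF summable_comparison_test[OF _ sm]]) (use bnd[OF gcos] in auto)
    have N2: "0 \<le> (\<Sum>n. (Wc v0 (\<lambda>z. - sin z) X s n - Wc v0 (\<lambda>z. - sin z) X t n)^2)"
      by (rule suminf_nonneg[OF summable_comparison_test[OF _ sm]]) (use bnd[OF gsin] in auto)
    have "Hnorm (Hdiff (Sol X s) (Sol X t)) = sqrt ((X s - X t)^2 + ((\<Sum>n. (Wc u0 cos X s n - Wc u0 cos X t n)^2)
        + (\<Sum>n. (Wc v0 (\<lambda>z. - sin z) X s n - Wc v0 (\<lambda>z. - sin z) X t n)^2)))"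
      unfolding Hnorm_def Hdiff_def Sol_def by (simp add: add.assoc)
    also have "\<dots> \<le> \<bar>X s - X t\<bar> + sqrt ((\<Sum>n. (Wc u0 cos X s n - Wc u0 cos X t n)^2)
        + (\<Sum>n. (Wc v0 (\<lambda>z. - sin z) X s n - Wc v0 (\<lambda>z. - sin z) X t n)^2))"
      by (rule sqrt_sum_le) (use N1 N2 in simp)
    also have "\<dots> \<le> \<bar>X s - X t\<bar> + sqrt (2 * E) * \<bar>s - t\<bar>"
    proof -
      have "sqrt ((\<Sum>n. (Wc u0 cos X s n - Wc u0 cos X t n)^2)
        + (\<Sum>n. (Wc v0 (\<lambda>z. - sin z) X s n - Wc v0 (\<lambda>z. - sin z) X t n)^2)) \<le> sqrt (2 * E * (s - t)^2)"
        by (rule real_sqrt_le_mono) (use S1 S2 in simp)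
      also have "\<dots> = sqrt (2 * E) * \<bar>s - t\<bar>" by (simp add: real_sqrt_mult)
      finally show ?thesis by simp
    qed
    also have "\<dots> < e / 2 + e / 2"
    proof (rule add_less_le_mono)
      show "\<bar>X s - X t\<bar> < e / 2" using d1(2)[OF st] ds unfolding d_def by (simp add: dist_real_def)
      have "\<bar>s - t\<bar> \<le> e / (2 * (sqrt (2 * E) + 1))" using ds unfolding d_def by simp
      hence "sqrt (2 * E) * \<bar>s - t\<bar> \<le> sqrt (2 * E) * (e / (2 * (sqrt (2 * E) + 1)))"
        using E by (intro mult_left_mono) auto
      also have "\<dots> \<le> e / 2" by (rule aux_q) (use e E in auto)
      finally show "sqrt (2 * E) * \<bar>s - t\<bar> \<le> e / 2" .
    qed
    finally show "Hnorm (Hdiff (Sol X s) (Sol X t)) < e" by simp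
  qed
qed

lemma Sol_bnd:
  assumes X: "\<And>T. continuous_on {0..T} X"
  shows "\<exists>C. \<forall>t\<in>{0..T}. Hnorm (Sol X t) \<le> C"
proof (cases "T \<ge> 0")
  case False thus ?thesis by auto
next
  case True
  have "compact (X ` {0..T})" by (rule compact_continuous_image[OF X compact_Icc])
  hence "bounded (X ` {0..T})" by (rule compact_imp_bounded)
  then obtain CX where CX: "\<forall>x\<in>X ` {0..T}. norm x \<le> CX" unfolding bounded_iff by (elim exE)
  define U where "U = (\<Sum>n. 2 * (u0 n)^2 + 2 * (e4 n * T^2))"
  define V where "V = (\<Sum>n. 2 * (v0 n)^2 + 2 * (e4 n * T^2))"
  have su: "summable (\<lambda>n. 2 * (u0 n)^2 + 2 * (e4 n * T^2))"
    by (intro summable_add summable_mult usum summable_mult2 e4_sum)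
  have sv: "summable (\<lambda>n. 2 * (v0 n)^2 + 2 * (e4 n * T^2))"
    by (intro summable_add summable_mult vsum summable_mult2 e4_sum)
  show ?thesis
  proof (intro exI[of _ "sqrt (CX^2 + U + V)"] ballI)
    fix t assume t: "t \<in> {0..T}"
    have t0: "t \<ge> 0" using t by simp
    have Xt: "continuous_on {0..t} X" by (rule X)
    have b: "(Wc c g X t n)^2 \<le> 2 * (c n)^2 + 2 * (e4 n * T^2)"
      if "continuous_on UNIV g" "\<And>z. \<bar>g z\<bar> \<le> 1" for c g n
    proof -
      have "t^2 \<le> T^2" using t by (intro power_mono) auto
      hence "e4 n * t^2 \<le> e4 n * T^2" using e4_nn by (intro mult_left_mono) auto
      thus ?thesis using W_sq[OF t0 Xt that, of c n] by linarith
    qed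
    have "(\<Sum>n. (Wc u0 cos X t n)^2) \<le> U" unfolding U_def
      by (rule suminf_le[OF b[OF gcos] W_summable[OF t0 Xt usum gcos] su])
    moreover have "(\<Sum>n. (Wc v0 (\<lambda>z. - sin z) X t n)^2) \<le> V" unfolding V_def
      by (rule suminf_le[OF b[OF gsin] W_summable[OF t0 Xt vsum gsin] sv])
    moreover have "(X t)^2 \<le> CX^2"
    proof -
      have "\<bar>X t\<bar> \<le> CX" using bspec[OF CX imageI[OF t]] by simp
      hence "\<bar>X t\<bar>^2 \<le> CX^2" by (intro power_mono) auto
      thus ?thesis by simp
    qed
    ultimately show "Hnorm (Sol X t) \<le> sqrt (CX^2 + U + V)"
      unfolding Hnorm_def Sol_def by (simp add: real_sqrt_le_mono)
  qed
qed

lemma Sol_int1: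
  assumes X: "\<And>T. continuous_on {0..T} X" and t: "t \<ge> 0"
  shows "((\<lambda>s. fst (snd (Fdrift a (Sol X s))) n) has_integral (fst (snd (Sol X t)) n - u0 n)) {0..t}"
proof (cases "n = 0")
  case True thus ?thesis by (simp add: Fdrift_def Sol_def Wc_def)
next
  case False
  have "((\<lambda>s. cos (real n * X s)) has_integral integral {0..t} (\<lambda>s. cos (real n * X s))) {0..t}"
    unfolding has_integral_integral[symmetric]
    by (rule integrable_continuous_real) (intro continuous_intros X)
  hence "((\<lambda>s. sqrt (a n) * cos (real n * X s)) has_integral sqrt (a n) * integral {0..t} (\<lambda>s. cos (real n * X s))) {0..t}"
    by (rule has_integral_mult_right)
  thus ?thesis using False by (simp add: Fdrift_def Sol_def Wc_def)
qed

lemma Sol_int2: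
  assumes X: "\<And>T. continuous_on {0..T} X" and t: "t \<ge> 0"
  shows "((\<lambda>s. snd (snd (Fdrift a (Sol X s))) n) has_integral (snd (snd (Sol X t)) n - v0 n)) {0..t}"
proof (cases "n = 0")
  case True thus ?thesis by (simp add: Fdrift_def Sol_def Wc_def)
next
  case False
  have "((\<lambda>s. - sin (real n * X s)) has_integral integral {0..t} (\<lambda>s. - sin (real n * X s))) {0..t}"
    unfolding has_integral_integral[symmetric]
    by (rule integrable_continuous_real) (intro continuous_intros X)
  hence "((\<lambda>s. sqrt (a n) * (- sin (real n * X s))) has_integral sqrt (a n) * integral {0..t} (\<lambda>s. - sin (real n * X s))) {0..t}"
    by (rule has_integral_mult_right)
  thus ?thesis using False by (simp add: Fdrift_def Sol_def Wc_def)
qed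

lemma Sol_int0:
  assumes X: "\<And>T. continuous_on {0..T} X" and t: "t \<ge> 0"
    and fx: "(G X has_integral (X t - x0 - b t)) {0..t}"
  shows "((\<lambda>s. fst (Fdrift a (Sol X s))) has_integral (fst (Sol X t) - x0 - b t)) {0..t}"
proof -
  have "((\<lambda>s. fst (Fdrift a (Sol X s))) has_integral (X t - x0 - b t)) {0..t}"
    by (rule has_integral_eq[OF _ fx]) (simp add: KI[OF _ X])
  thus ?thesis by (simp add: Sol_def)
qed

lemma Sol_is_solution:
  assumes bc: "\<And>T. continuous_on {0..T} b"
  shows "is_solution a b (x0, u0, v0) (Sol (Xs b))"
  unfolding is_solution_def
proof (intro conjI allI impI)
  note X = Xs_cont[OF bc]
  show "\<And>t. t \<ge> 0 \<Longrightarrow> inH (Sol (Xs b) t)" by (rule Sol_inH[OF _ X])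
  show "\<And>t \<epsilon>. t \<ge> 0 \<Longrightarrow> \<epsilon> > 0 \<Longrightarrow> \<exists>\<delta>>0. \<forall>s\<ge>0. \<bar>s - t\<bar> < \<delta> \<longrightarrow> Hnorm (Hdiff (Sol (Xs b) s) (Sol (Xs b) t)) < \<epsilon>"
    by (rule Sol_cont[OF X])
  show "\<And>T. \<exists>C. \<forall>t\<in>{0..T}. Hnorm (Sol (Xs b) t) \<le> C" by (rule Sol_bnd[OF X])
  show "\<And>t. t \<ge> 0 \<Longrightarrow> ((\<lambda>s. fst (Fdrift a (Sol (Xs b) s))) has_integral fst (Sol (Xs b) t) - fst (x0, u0, v0) - b t) {0..t}"
  proof -
    fix t :: real assume t: "t \<ge> 0"
    show "((\<lambda>s. fst (Fdrift a (Sol (Xs b) s))) has_integral fst (Sol (Xs b) t) - fst (x0, u0, v0) - b t) {0..t}"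
      using Sol_int0[of "Xs b" t b, OF X t Xs_fix[OF bc t]] by simp
  qed
  show "\<And>t n. t \<ge> 0 \<Longrightarrow> ((\<lambda>s. fst (snd (Fdrift a (Sol (Xs b) s))) n) has_integral fst (snd (Sol (Xs b) t)) n - fst (snd (x0, u0, v0)) n) {0..t}"
    using Sol_int1[OF X] by simp
  show "\<And>t n. t \<ge> 0 \<Longrightarrow> ((\<lambda>s. snd (snd (Fdrift a (Sol (Xs b) s))) n) has_integral snd (snd (Sol (Xs b) t)) n - snd (snd (x0, u0, v0)) n) {0..t}"
    using Sol_int2[OF X] by simp
qed

end


lemma Fdrift_comps:
  "fst (snd (Fdrift a p)) n = (if n = 0 then 0 else sqrt (a n) * cos (real n * fst p))"
  "snd (snd (Fdrift a p)) n = (if n = 0 then 0 else - sqrt (a n) * sin (real n * fst p))"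
  by (cases p; simp add: Fdrift_def)+

context sysp begin

lemma Sol_cong: assumes "\<And>r. r \<in> {0..t} \<Longrightarrow> X1 r = X2 r" "t \<ge> 0" shows "Sol X1 t = Sol X2 t"
proof -
  have 1: "integral {0..t} (\<lambda>r. cos (real n * X1 r)) = integral {0..t} (\<lambda>r. cos (real n * X2 r))" for n
    by (rule integral_cong) (simp add: assms(1))
  have 2: "integral {0..t} (\<lambda>r. - sin (real n * X1 r)) = integral {0..t} (\<lambda>r. - sin (real n * X2 r))" for n
    by (rule integral_cong) (simp add: assms(1))
  have "X1 t = X2 t" using assms by simp
  thus ?thesis unfolding Sol_def Wc_def 1 2 by simp
qed

lemma sol_repr:
  assumes S: "is_solution a b (x0, u0, v0) Y"
  shows "\<And>T. continuous_on {0..T} (\<lambda>t. fst (Y t))"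
    and "\<And>t. t \<ge> 0 \<Longrightarrow> Y t = Sol (\<lambda>t. fst (Y t)) t"
    and "\<And>t. t \<ge> 0 \<Longrightarrow> (G (\<lambda>t. fst (Y t)) has_integral (fst (Y t) - x0 - b t)) {0..t}"
proof -
  define X where "X t = fst (Y t)" for t
  note S' = S[unfolded is_solution_def]
  have inY: "\<And>t. t \<ge> 0 \<Longrightarrow> inH (Y t)" using S' by blast
  have cY: "\<And>t e. t \<ge> 0 \<Longrightarrow> e > 0 \<Longrightarrow> \<exists>d>0. \<forall>s\<ge>0. \<bar>s - t\<bar> < d \<longrightarrow> Hnorm (Hdiff (Y s) (Y t)) < e"
    using S' by blast
  have i0: "\<And>t. t \<ge> 0 \<Longrightarrow> ((\<lambda>s. fst (Fdrift a (Y s))) has_integral (fst (Y t) - x0 - b t)) {0..t}"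
    using S' by simp
  have i1: "\<And>t n. t \<ge> 0 \<Longrightarrow> ((\<lambda>s. fst (snd (Fdrift a (Y s))) n) has_integral (fst (snd (Y t)) n - u0 n)) {0..t}"
    using S' by simp
  have i2: "\<And>t n. t \<ge> 0 \<Longrightarrow> ((\<lambda>s. snd (snd (Fdrift a (Y s))) n) has_integral (snd (snd (Y t)) n - v0 n)) {0..t}"
    using S' by simp
  have XC: "continuous_on {0..T} X" for T
    unfolding continuous_on_iff
  proof (intro ballI allI impI)
    fix t and e :: real assume t: "t \<in> {0..T}" and e: "e > 0"
    obtain d where d: "d > 0" "\<And>s. s \<ge> 0 \<Longrightarrow> \<bar>s - t\<bar> < d \<Longrightarrow> Hnorm (Hdiff (Y s) (Y t)) < e"
      using cY[of t e] t e by auto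
    show "\<exists>d>0. \<forall>s\<in>{0..T}. dist s t < d \<longrightarrow> dist (X s) (X t) < e"
    proof (intro exI[of _ d] conjI ballI impI d(1))
      fix s assume s: "s \<in> {0..T}" and ds: "dist s t < d"
      have "\<bar>X s - X t\<bar> \<le> Hnorm (Hdiff (Y s) (Y t))" unfolding X_def
        by (rule Hnorm_fst) (use inY s t in auto)
      also have "\<dots> < e" using d(2)[of s] s ds by (simp add: dist_real_def)
      finally show "dist (X s) (X t) < e" by (simp add: dist_real_def)
    qed
  qed
  thus "\<And>T. continuous_on {0..T} (\<lambda>t. fst (Y t))" unfolding X_def .
  have YS: "Y t = Sol X t" if t: "t \<ge> 0" for t
  proof -
    have 1: "fst (snd (Y t)) n = Wc u0 cos X t n" for n
    proof -
      have A: "((\<lambda>s. fst (snd (Fdrift a (Sol X s))) n) has_integral (fst (snd (Sol X t)) n - u0 n)) {0..t}"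
        by (rule Sol_int1[OF XC t])
      have B: "((\<lambda>s. fst (snd (Fdrift a (Sol X s))) n) has_integral (fst (snd (Y t)) n - u0 n)) {0..t}"
        by (rule has_integral_eq[OF _ i1[OF t, of n]]) (simp add: Fdrift_comps Sol_def X_def)
      have "fst (snd (Sol X t)) n - u0 n = fst (snd (Y t)) n - u0 n" by (rule has_integral_unique[OF A B])
      thus ?thesis by (simp add: Sol_def)
    qed
    have 2: "snd (snd (Y t)) n = Wc v0 (\<lambda>z. - sin z) X t n" for n
    proof -
      have A: "((\<lambda>s. snd (snd (Fdrift a (Sol X s))) n) has_integral (snd (snd (Sol X t)) n - v0 n)) {0..t}"
        by (rule Sol_int2[OF XC t])
      have B: "((\<lambda>s. snd (snd (Fdrift a (Sol X s))) n) has_integral (snd (snd (Y t)) n - v0 n)) {0..t}"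
        by (rule has_integral_eq[OF _ i2[OF t, of n]]) (simp add: Fdrift_comps Sol_def X_def)
      have "snd (snd (Sol X t)) n - v0 n = snd (snd (Y t)) n - v0 n" by (rule has_integral_unique[OF A B])
      thus ?thesis by (simp add: Sol_def)
    qed
    show ?thesis unfolding Sol_def using 1 2 by (simp add: X_def prod_eq_iff fun_eq_iff)
  qed
  thus "\<And>t. t \<ge> 0 \<Longrightarrow> Y t = Sol (\<lambda>t. fst (Y t)) t" unfolding X_def .
  show "\<And>t. t \<ge> 0 \<Longrightarrow> (G (\<lambda>t. fst (Y t)) has_integral (fst (Y t) - x0 - b t)) {0..t}"
  proof -
    fix t :: real assume t: "t \<ge> 0"
    show "(G (\<lambda>t. fst (Y t)) has_integral (fst (Y t) - x0 - b t)) {0..t}"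
    proof (rule has_integral_eq[OF _ i0[OF t]])
      fix s assume s: "s \<in> {0..t}"
      have "fst (Fdrift a (Y s)) = fst (Fdrift a (Sol X s))" using YS[of s] s by simp
      also have "\<dots> = G X s" by (rule KI) (use s XC in auto)
      finally show "fst (Fdrift a (Y s)) = G (\<lambda>t. fst (Y t)) s" unfolding X_def .
    qed
  qed
qed

lemma sol_unique:
  assumes S1: "is_solution a b (x0, u0, v0) Y1" and S2: "is_solution a b (x0, u0, v0) Y2" and t: "t \<ge> 0"
  shows "Y1 t = Y2 t"
proof -
  have c1: "\<And>T. continuous_on {0..T} (\<lambda>t. fst (Y1 t))" by (rule sol_repr(1)[OF S1])
  have c2: "\<And>T. continuous_on {0..T} (\<lambda>t. fst (Y2 t))" by (rule sol_repr(1)[OF S2])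
  have i1: "(G (\<lambda>t. fst (Y1 t)) has_integral (fst (Y1 t) - (x0 + b t))) {0..t}" if "t \<ge> 0" for t
    using sol_repr(3)[OF S1 that] by (simp only: diff_diff_eq)
  have i2: "(G (\<lambda>t. fst (Y2 t)) has_integral (fst (Y2 t) - (x0 + b t))) {0..t}" if "t \<ge> 0" for t
    using sol_repr(3)[OF S2 that] by (simp only: diff_diff_eq)
  have eqX: "fst (Y1 r) = fst (Y2 r)" if "r \<ge> 0" for r
    using X_unique[OF c1 c2 i1 i2 that] by simp
  have "Y1 t = Sol (\<lambda>t. fst (Y1 t)) t" by (rule sol_repr(2)[OF S1 t])
  also have "\<dots> = Sol (\<lambda>t. fst (Y2 t)) t" by (rule Sol_cong) (use eqX t in auto)
  also have "\<dots> = Y2 t" by (rule sol_repr(2)[OF S2 t, symmetric])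
  finally show ?thesis .
qed

end


lemma integral_partition:
  fixes f :: "real \<Rightarrow> real"
  assumes h: "h \<ge> 0" and c: "continuous_on {0..real n * h} f"
  shows "integral {0..real n * h} f = (\<Sum>i<n. integral {real i * h..real (Suc i) * h} f)"
  using c
proof (induction n)
  case 0 thus ?case by simp
next
  case (Suc n)
  have le: "real n * h \<le> real (Suc n) * h" using h by (simp add: distrib_right)
  have c': "continuous_on {0..real n * h} f"
    by (rule continuous_on_subset[OF Suc.prems]) (use le in auto)
  have "integral {0..real n * h} f + integral {real n * h..real (Suc n) * h} f = integral {0..real (Suc n) * h} f"
    by (rule Henstock_Kurzweil_Integration.integral_combine)
       (use h le Suc.prems in \<open>auto intro: integrable_continuous_real\<close>)
  thus ?case using Suc.IH[OF c'] by simp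
qed

lemma riemann:
  fixes f :: "real \<Rightarrow> real"
  assumes s: "s \<ge> 0" and c: "continuous_on {0..s} f"
  shows "(\<lambda>m. \<Sum>i<Suc m. s / real (Suc m) * f (real i * (s / real (Suc m)))) \<longlonglongrightarrow> integral {0..s} f"
proof (rule LIMSEQ_I)
  fix r :: real assume r: "r > 0"
  define e where "e = r / (2 * (s + 1))"
  have e: "e > 0" unfolding e_def using r s by simp
  have "uniformly_continuous_on {0..s} f" by (rule compact_uniformly_continuous[OF c compact_Icc])
  then obtain d where d: "d > 0" "\<And>x x'. x \<in> {0..s} \<Longrightarrow> x' \<in> {0..s} \<Longrightarrow> dist x' x < d \<Longrightarrow> dist (f x') (f x) < e"
    unfolding uniformly_continuous_on_def using e by metis
  obtain N :: nat where N: "s / d < real N" using reals_Archimedean2 by blast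
  show "\<exists>no. \<forall>m\<ge>no. norm ((\<Sum>i<Suc m. s / real (Suc m) * f (real i * (s / real (Suc m)))) - integral {0..s} f) < r"
  proof (intro exI allI impI)
    fix m assume m: "m \<ge> N"
    define h where "h = s / real (Suc m)"
    have h0: "h \<ge> 0" unfolding h_def using s by simp
    have hd: "h < d"
    proof -
      have "s / d < real (Suc m)" using N m by simp
      hence "s < d * real (Suc m)" using d(1) by (simp add: field_simps)
      thus ?thesis unfolding h_def by (simp add: field_simps mult.commute)
    qed
    have nh: "real (Suc m) * h = s" unfolding h_def by simp
    have I: "integral {0..s} f = (\<Sum>i<Suc m. integral {real i * h..real (Suc i) * h} f)"
      using integral_partition[OF h0, of "Suc m" f] c unfolding nh by simp
    have piece: "\<bar>integral {real i * h..real (Suc i) * h} f - h * f (real i * h)\<bar> \<le> e * h" if i: "i < Suc m" for i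
    proof -
      have sub: "{real i * h..real (Suc i) * h} \<subseteq> {0..s}"
      proof -
        have "real (Suc i) * h \<le> real (Suc m) * h" using i h0 by (intro mult_right_mono) auto
        thus ?thesis using h0 nh by auto
      qed
      have le: "real i * h \<le> real (Suc i) * h" using h0 by (simp add: distrib_right)
      have ci: "continuous_on {real i * h..real (Suc i) * h} f" by (rule continuous_on_subset[OF c sub])
      have "integral {real i * h..real (Suc i) * h} (\<lambda>x. f x - f (real i * h))
          = integral {real i * h..real (Suc i) * h} f - integral {real i * h..real (Suc i) * h} (\<lambda>x. f (real i * h))"
        by (rule integral_diff[OF integrable_continuous_real[OF ci] integrable_continuous_real]) (rule continuous_on_const)
      also have "integral {real i * h..real (Suc i) * h} (\<lambda>x. f (real i * h)) = h * f (real i * h)"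
        using le by (simp add: algebra_simps)
      finally have eq: "integral {real i * h..real (Suc i) * h} f - h * f (real i * h)
          = integral {real i * h..real (Suc i) * h} (\<lambda>x. f x - f (real i * h))" by simp
      have "norm (integral {real i * h..real (Suc i) * h} (\<lambda>x. f x - f (real i * h))) \<le> e * (real (Suc i) * h - real i * h)"
      proof (rule integral_bound[OF le])
        show "continuous_on {real i * h..real (Suc i) * h} (\<lambda>x. f x - f (real i * h))"
          by (intro continuous_intros ci)
        fix x assume x: "x \<in> {real i * h..real (Suc i) * h}"
        have xi: "real i * h \<in> {0..s}" using sub le by auto
        have "dist x (real i * h) < d" using x hd by (simp add: dist_real_def algebra_simps)
        hence "dist (f x) (f (real i * h)) < e" using d(2)[OF xi _ ] x sub by blast
        thus "norm (f x - f (real i * h)) \<le> e" by (simp add: dist_real_def)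
      qed
      thus ?thesis unfolding eq by (simp add: algebra_simps)
    qed
    have "\<bar>(\<Sum>i<Suc m. h * f (real i * h)) - integral {0..s} f\<bar>
        = \<bar>\<Sum>i<Suc m. (integral {real i * h..real (Suc i) * h} f - h * f (real i * h))\<bar>"
      unfolding I by (simp add: sum_subtractf abs_minus_commute)
    also have "\<dots> \<le> (\<Sum>i<Suc m. \<bar>integral {real i * h..real (Suc i) * h} f - h * f (real i * h)\<bar>)"
      by (rule sum_abs)
    also have "\<dots> \<le> (\<Sum>i<Suc m. e * h)" by (rule sum_mono) (use piece in auto)
    also have "\<dots> = e * s" using nh by (simp add: mult.commute mult.left_commute)
    also have "\<dots> < r"
    proof -
      have "e * s = r * s / (2 * (s + 1))" unfolding e_def by simp
      also have "\<dots> < r"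
      proof -
        have "r * s \<ge> 0" using r s by simp
        hence "r * s < r * (2 * (s + 1))" using r by (simp add: algebra_simps)
        thus ?thesis using s by (simp add: field_simps)
      qed
      finally show ?thesis .
    qed
    finally show "norm ((\<Sum>i<Suc m. s / real (Suc m) * f (real i * (s / real (Suc m)))) - integral {0..s} f) < r"
      unfolding h_def[symmetric] by simp
  qed
qed

lemma meas_integral:
  fixes h :: "real \<Rightarrow> 'w \<Rightarrow> real"
  assumes s: "s \<ge> 0" and m: "\<And>r. r \<in> {0..s} \<Longrightarrow> h r \<in> borel_measurable N"
    and c: "\<And>\<omega>. \<omega> \<in> space N \<Longrightarrow> continuous_on {0..s} (\<lambda>r. h r \<omega>)"
  shows "(\<lambda>\<omega>. integral {0..s} (\<lambda>r. h r \<omega>)) \<in> borel_measurable N"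
proof (rule borel_measurable_LIMSEQ_real)
  fix \<omega> assume "\<omega> \<in> space N"
  show "(\<lambda>m. \<Sum>i<Suc m. s / real (Suc m) * h (real i * (s / real (Suc m))) \<omega>) \<longlonglongrightarrow> integral {0..s} (\<lambda>r. h r \<omega>)"
    by (rule riemann[OF s c[OF \<open>\<omega> \<in> space N\<close>]])
next
  fix m :: nat
  have pts: "real i * (s / real (Suc m)) \<in> {0..s}" if "i < Suc m" for i
  proof -
    have "real i * (s / real (Suc m)) \<le> real (Suc m) * (s / real (Suc m))"
      using that s by (intro mult_right_mono) auto
    thus ?thesis using s by simp
  qed
  show "(\<lambda>\<omega>. \<Sum>i<Suc m. s / real (Suc m) * h (real i * (s / real (Suc m))) \<omega>) \<in> borel_measurable N"
    by (intro borel_measurable_sum borel_measurable_times borel_measurable_const m pts) simp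
qed



lemma BMf_space: "space (BM_filt M B t) = space M"
  unfolding BM_filt_def by (simp add: space_measure_of_conv)

lemma BMf_meas:
  assumes s: "s \<in> {0..t}"
  shows "B s \<in> borel_measurable (BM_filt M B t)"
proof (rule measurableI)
  fix A :: "real set" assume A: "A \<in> sets borel"
  have sub: "(\<Union>s\<in>{0..t}. {B s -` A \<inter> space M | A. A \<in> sets borel}) \<subseteq> Pow (space M)" by auto
  have "B s -` A \<inter> space M \<in> (\<Union>s\<in>{0..t}. {B s -` A \<inter> space M | A. A \<in> sets borel})"
    using s A by blast
  hence "B s -` A \<inter> space M \<in> sigma_sets (space M) (\<Union>s\<in>{0..t}. {B s -` A \<inter> space M | A. A \<in> sets borel})"
    by (rule sigma_sets.Basic)
  thus "B s -` A \<inter> space (BM_filt M B t) \<in> sets (BM_filt M B t)"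
    unfolding BM_filt_def using sub by (simp add: sets_measure_of space_measure_of_conv)
qed simp

context sysp begin

lemma GM:
  assumes s: "s \<ge> 0" and m: "\<And>r. r \<in> {0..s} \<Longrightarrow> (\<lambda>\<omega>. X \<omega> r) \<in> borel_measurable N"
    and c: "\<And>\<omega>. \<omega> \<in> space N \<Longrightarrow> continuous_on {0..s} (X \<omega>)"
  shows "(\<lambda>\<omega>. G (X \<omega>) s) \<in> borel_measurable N"
proof -
  have pb: "phi \<in> borel_measurable borel" by (rule borel_measurable_continuous_onI[OF phi_cont])
  have sb: "psi \<in> borel_measurable borel" by (rule borel_measurable_continuous_onI[OF psi_cont])
  have "(\<lambda>\<omega>. phi (X \<omega> s)) \<in> borel_measurable N"
    by (rule measurable_compose[OF m pb]) (use s in simp)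
  moreover have "(\<lambda>\<omega>. integral {0..s} (\<lambda>r. psi (X \<omega> s - X \<omega> r))) \<in> borel_measurable N"
  proof (rule meas_integral[OF s])
    fix r assume r: "r \<in> {0..s}"
    have "(\<lambda>\<omega>. X \<omega> s - X \<omega> r) \<in> borel_measurable N"
      by (intro borel_measurable_diff m r) (use s in simp)
    thus "(\<lambda>\<omega>. psi (X \<omega> s - X \<omega> r)) \<in> borel_measurable N" by (rule measurable_compose[OF _ sb])
  next
    fix \<omega> assume "\<omega> \<in> space N"
    thus "continuous_on {0..s} (\<lambda>r. psi (X \<omega> s - X \<omega> r))" by (intro psi_int_cont c)
  qed
  ultimately show ?thesis unfolding G_def by (rule borel_measurable_add)
qed

lemma GIM:
  assumes t: "t \<ge> 0" and m: "\<And>r. r \<in> {0..t} \<Longrightarrow> (\<lambda>\<omega>. X \<omega> r) \<in> borel_measurable N"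
    and c: "\<And>\<omega>. \<omega> \<in> space N \<Longrightarrow> continuous_on {0..t} (X \<omega>)"
  shows "(\<lambda>\<omega>. integral {0..t} (G (X \<omega>))) \<in> borel_measurable N"
proof (rule meas_integral[OF t])
  fix r assume r: "r \<in> {0..t}"
  show "(\<lambda>\<omega>. G (X \<omega>) r) \<in> borel_measurable N"
  proof (rule GM)
    show "0 \<le> r" using r by simp
    fix q assume "q \<in> {0..r}"
    thus "(\<lambda>\<omega>. X \<omega> q) \<in> borel_measurable N" using r by (intro m) auto
  next
    fix \<omega> assume "\<omega> \<in> space N"
    thus "continuous_on {0..r} (X \<omega>)" using r by (auto intro: continuous_on_subset[OF c])
  qed
next
  fix \<omega> assume "\<omega> \<in> space N"
  thus "continuous_on {0..t} (\<lambda>r. G (X \<omega>) r)" using G_cont[OF t c] by simp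
qed

lemma Pic_meas:
  assumes t: "t \<ge> 0" and mB: "\<And>s. s \<in> {0..t} \<Longrightarrow> (\<lambda>\<omega>. B s \<omega>) \<in> borel_measurable N"
    and cB: "\<And>\<omega> T. \<omega> \<in> space N \<Longrightarrow> continuous_on {0..T} (\<lambda>s. B s \<omega>)"
  shows "s \<in> {0..t} \<Longrightarrow> (\<lambda>\<omega>. Pic (\<lambda>s. B s \<omega>) k s) \<in> borel_measurable N"
proof (induction k arbitrary: s)
  case 0 thus ?case by (simp, intro borel_measurable_add borel_measurable_const mB)
next
  case (Suc k)
  have s: "s \<ge> 0" using Suc.prems by simp
  have "(\<lambda>\<omega>. integral {0..s} (G (Pic (\<lambda>s. B s \<omega>) k))) \<in> borel_measurable N"
  proof (rule GIM[OF s])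
    fix r assume "r \<in> {0..s}"
    thus "(\<lambda>\<omega>. Pic (\<lambda>s. B s \<omega>) k r) \<in> borel_measurable N" using Suc.prems by (intro Suc.IH) auto
  next
    fix \<omega> assume "\<omega> \<in> space N"
    thus "continuous_on {0..s} (Pic (\<lambda>s. B s \<omega>) k)" by (intro Pic_cont cB)
  qed
  thus ?case by (simp, intro borel_measurable_add borel_measurable_const mB Suc.prems)
qed

lemma Xs_meas:
  assumes t: "t \<ge> 0" and mB: "\<And>s. s \<in> {0..t} \<Longrightarrow> (\<lambda>\<omega>. B s \<omega>) \<in> borel_measurable N"
    and cB: "\<And>\<omega> T. \<omega> \<in> space N \<Longrightarrow> continuous_on {0..T} (\<lambda>s. B s \<omega>)"
    and s: "s \<in> {0..t}"
  shows "(\<lambda>\<omega>. Xs (\<lambda>s. B s \<omega>) s) \<in> borel_measurable N"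
proof (rule borel_measurable_LIMSEQ_real)
  fix \<omega> assume "\<omega> \<in> space N"
  thus "(\<lambda>k. Pic (\<lambda>s. B s \<omega>) k s) \<longlonglongrightarrow> Xs (\<lambda>s. B s \<omega>) s"
    using s by (intro Pic_lim(1) cB) auto
next
  fix k show "(\<lambda>\<omega>. Pic (\<lambda>s. B s \<omega>) k s) \<in> borel_measurable N" by (rule Pic_meas[OF t mB cB s])
qed

lemma Wc_meas:
  assumes t: "t \<ge> 0" and mB: "\<And>s. s \<in> {0..t} \<Longrightarrow> (\<lambda>\<omega>. B s \<omega>) \<in> borel_measurable N"
    and cB: "\<And>\<omega> T. \<omega> \<in> space N \<Longrightarrow> continuous_on {0..T} (\<lambda>s. B s \<omega>)"
    and gc: "continuous_on UNIV g"
  shows "(\<lambda>\<omega>. Wc c g (Xs (\<lambda>s. B s \<omega>)) t n) \<in> borel_measurable N"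
proof -
  have gb: "g \<in> borel_measurable borel" by (rule borel_measurable_continuous_onI[OF gc])
  have "(\<lambda>\<omega>. integral {0..t} (\<lambda>r. g (real n * Xs (\<lambda>s. B s \<omega>) r))) \<in> borel_measurable N"
  proof (rule meas_integral[OF t])
    fix r assume r: "r \<in> {0..t}"
    have "(\<lambda>\<omega>. real n * Xs (\<lambda>s. B s \<omega>) r) \<in> borel_measurable N"
      by (intro borel_measurable_times borel_measurable_const Xs_meas[OF t mB cB r])
    thus "(\<lambda>\<omega>. g (real n * Xs (\<lambda>s. B s \<omega>) r)) \<in> borel_measurable N" by (rule measurable_compose[OF _ gb])
  next
    fix \<omega> assume "\<omega> \<in> space N"
    hence "continuous_on {0..t} (Xs (\<lambda>s. B s \<omega>))" by (intro Xs_cont cB)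
    hence "continuous_on {0..t} (\<lambda>r. real n * Xs (\<lambda>s. B s \<omega>) r)" by (intro continuous_intros)
    thus "continuous_on {0..t} (\<lambda>r. g (real n * Xs (\<lambda>s. B s \<omega>) r))"
      by (rule continuous_on_compose2[OF gc]) simp
  qed
  thus ?thesis unfolding Wc_def by (cases "n = 0") (simp_all add: borel_measurable_add borel_measurable_times)
qed

lemma adapted:
  assumes BM: "std_BM M B"
  shows "H_adapted M B (\<lambda>t \<omega>. Sol (Xs (\<lambda>s. B s \<omega>)) t)"
  unfolding H_adapted_def
proof (intro allI impI conjI)
  fix t :: real assume t: "t \<ge> 0"
  let ?N = "BM_filt M B t"
  have mB: "\<And>s. s \<in> {0..t} \<Longrightarrow> (\<lambda>\<omega>. B s \<omega>) \<in> borel_measurable ?N"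
    by (rule BMf_meas)
  have cB: "\<And>\<omega> T. \<omega> \<in> space ?N \<Longrightarrow> continuous_on {0..T} (\<lambda>s. B s \<omega>)"
  proof -
    fix \<omega> T assume "\<omega> \<in> space ?N"
    hence "\<omega> \<in> space M" by (simp add: BMf_space)
    hence "continuous_on {0..} (\<lambda>s. B s \<omega>)" using BM unfolding std_BM_def by blast
    thus "continuous_on {0..T} (\<lambda>s. B s \<omega>)" by (rule continuous_on_subset) auto
  qed
  show "(\<lambda>\<omega>. fst (Sol (Xs (\<lambda>s. B s \<omega>)) t)) \<in> borel_measurable ?N"
    unfolding Sol_def using Xs_meas[OF t mB cB, of t] t by simp
  fix n
  show "(\<lambda>\<omega>. fst (snd (Sol (Xs (\<lambda>s. B s \<omega>)) t)) n) \<in> borel_measurable ?N"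
    unfolding Sol_def using Wc_meas[OF t mB cB gcos1] by simp
  show "(\<lambda>\<omega>. snd (snd (Sol (Xs (\<lambda>s. B s \<omega>)) t)) n) \<in> borel_measurable ?N"
    unfolding Sol_def using Wc_meas[OF t mB cB gsin1] by simp
qed

end


lemma fourth_moment:
  assumes BM: "std_BM M B" and s: "0 \<le> s" and st: "s < t"
  shows "(\<integral>\<^sup>+ \<omega>. ennreal ((B t \<omega> - B s \<omega>)^4) \<partial>M) = ennreal (3 * (t - s)^2)"
proof -
  define \<sigma> where "\<sigma> = sqrt (t - s)"
  have sp: "\<sigma> > 0" unfolding \<sigma>_def using st by simp
  have s2: "\<sigma>^2 = t - s" unfolding \<sigma>_def using st by simp
  have D: "distributed M lborel (\<lambda>\<omega>. B t \<omega> - B s \<omega>) (\<lambda>x. ennreal (normal_density 0 \<sigma> x))"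
    using BM s st unfolding std_BM_def \<sigma>_def by blast
  have "(\<integral>\<^sup>+ x. ennreal (normal_density 0 \<sigma> x) * ennreal (x^4) \<partial>lborel) = (\<integral>\<^sup>+ \<omega>. ennreal ((B t \<omega> - B s \<omega>)^4) \<partial>M)"
    by (rule distributed_nn_integral[OF D]) simp
  moreover have "(\<integral>\<^sup>+ x. ennreal (normal_density 0 \<sigma> x) * ennreal (x^4) \<partial>lborel) = (\<integral>\<^sup>+ x. ennreal (normal_density 0 \<sigma> x * x^4) \<partial>lborel)"
    by (rule nn_integral_cong) (simp add: ennreal_mult)
  moreover have HB: "has_bochner_integral lborel (\<lambda>x. normal_density 0 \<sigma> x * x^4) (fact 4 / ((2 / \<sigma>\<^sup>2) ^ 2 * fact 2))"
    using normal_moment_even[OF sp, of 0 2] by simp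
  moreover have "(fact 4 / ((2 / \<sigma>\<^sup>2) ^ 2 * fact 2) :: real) = 3 * (t - s)^2"
    unfolding s2 using st by (simp add: fact_numeral field_simps power2_eq_square)
  ultimately have "(\<integral>\<^sup>+ \<omega>. ennreal ((B t \<omega> - B s \<omega>)^4) \<partial>M) = ennreal (integral\<^sup>L lborel (\<lambda>x. normal_density 0 \<sigma> x * x^4))"
    using nn_integral_eq_integral[of lborel "\<lambda>x. normal_density 0 \<sigma> x * x^4"]
    by (simp add: has_bochner_integral_iff)
  also have "\<dots> = ennreal (3 * (t - s)^2)"
    using has_bochner_integral_integral_eq[OF HB] \<open>fact 4 / ((2 / \<sigma>\<^sup>2) ^ 2 * fact 2) = 3 * (t - s)^2\<close> by simp
  finally show ?thesis .
qed



definition "tau T (k::nat) (j::nat) = (T::real) * real j / 2 ^ k"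
definition "Dl B T k j \<omega> = B (tau T k (Suc j)) \<omega> - B (tau T k j) \<omega>"
definition "Mk B T k \<omega> = sqrt (sqrt (\<Sum>j<2^k. (Dl B T k j \<omega>)^4))"

lemma Mk_nn: "Mk B T k \<omega> \<ge> 0" unfolding Mk_def by (intro real_sqrt_ge_zero sum_nonneg) simp

lemma Dl_le_Mk: assumes j: "j < 2^k" shows "\<bar>Dl B T k j \<omega>\<bar> \<le> Mk B T k \<omega>"
proof -
  have "(Dl B T k j \<omega>)^4 \<le> (\<Sum>j<2^k. (Dl B T k j \<omega>)^4)"
    by (rule member_le_sum) (use j in auto)
  hence "sqrt (sqrt ((Dl B T k j \<omega>)^4)) \<le> Mk B T k \<omega>" unfolding Mk_def by (intro real_sqrt_le_mono)
  moreover have "sqrt (sqrt ((Dl B T k j \<omega>)^4)) = \<bar>Dl B T k j \<omega>\<bar>"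
  proof -
    have "(Dl B T k j \<omega>)^4 = ((Dl B T k j \<omega>)^2)^2" by (simp flip: power_mult)
    hence "sqrt ((Dl B T k j \<omega>)^4) = (Dl B T k j \<omega>)^2" by (simp only: real_sqrt_abs) simp
    thus ?thesis by (simp only: real_sqrt_abs)
  qed
  ultimately show ?thesis by simp
qed

lemma tau_even: "tau T (Suc m) (2 * i) = tau T m i" unfolding tau_def by simp
lemma tau_00: "tau T 0 0 = 0" "tau T 0 (Suc 0) = T" unfolding tau_def by simp_all

lemma dyadic:
  assumes B0: "B 0 \<omega> = 0"
  shows "j \<le> 2^m \<Longrightarrow> \<bar>B (tau T m j) \<omega>\<bar> \<le> (\<Sum>k\<le>m. Mk B T k \<omega>)"
proof (induction m arbitrary: j)
  case 0
  hence "j = 0 \<or> j = 1" by auto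
  thus ?case
  proof
    assume "j = 0" thus ?thesis using B0 Mk_nn[of B T 0 \<omega>] by (simp add: tau_00)
  next
    assume j1: "j = 1"
    have "\<bar>Dl B T 0 0 \<omega>\<bar> \<le> Mk B T 0 \<omega>" by (rule Dl_le_Mk) simp
    thus ?thesis using j1 B0 unfolding Dl_def by (simp add: tau_00)
  qed
next
  case (Suc m)
  have nn: "(\<Sum>k\<le>m. Mk B T k \<omega>) \<le> (\<Sum>k\<le>Suc m. Mk B T k \<omega>)" using Mk_nn[of B T "Suc m" \<omega>] by simp
  obtain i where "j = 2 * i \<or> j = 2 * i + 1" by (metis oddE evenE)
  thus ?case
  proof
    assume j: "j = 2 * i"
    hence "i \<le> 2^m" using Suc.prems by simp
    hence "\<bar>B (tau T m i) \<omega>\<bar> \<le> (\<Sum>k\<le>m. Mk B T k \<omega>)" by (rule Suc.IH)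
    thus ?thesis using nn j by (simp add: tau_even)
  next
    assume j: "j = 2 * i + 1"
    hence i: "i < 2^m" using Suc.prems by simp
    have "\<bar>B (tau T m i) \<omega>\<bar> \<le> (\<Sum>k\<le>m. Mk B T k \<omega>)" by (rule Suc.IH) (use i in simp)
    moreover have "\<bar>Dl B T (Suc m) (2 * i) \<omega>\<bar> \<le> Mk B T (Suc m) \<omega>" by (rule Dl_le_Mk) (use i in simp)
    moreover have "B (tau T (Suc m) j) \<omega> = B (tau T m i) \<omega> + Dl B T (Suc m) (2 * i) \<omega>"
      unfolding Dl_def using j by (simp add: tau_even)
    ultimately show ?thesis by simp
  qed
qed

lemma cont_bound:
  assumes B0: "B 0 \<omega> = 0" and c: "continuous_on {0..} (\<lambda>s. B s \<omega>)" and T: "T > 0"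
    and t: "t \<in> {0..T}" and R: "\<And>m. (\<Sum>k\<le>m. Mk B T k \<omega>) \<le> R"
  shows "\<bar>B t \<omega>\<bar> \<le> R"
proof -
  define y where "y m = t * 2 ^ m / T" for m :: nat
  define jm where "jm m = nat \<lfloor>y m\<rfloor>" for m
  have y0: "y m \<ge> 0" for m unfolding y_def using t T by simp
  have jmr: "real (jm m) = of_int \<lfloor>y m\<rfloor>" for m unfolding jm_def using y0[of m] by simp
  have jle: "jm m \<le> 2^m" for m
  proof -
    have "y m \<le> 2^m" unfolding y_def using t T by (simp add: field_simps)
    hence "of_int \<lfloor>y m\<rfloor> \<le> (2::real)^m" using of_int_floor_le[of "y m"] by linarith
    hence "real (jm m) \<le> real (2^m)" using jmr by simp
    thus ?thesis by linarith
  qed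
  have up: "tau T m (jm m) \<le> t" for m
  proof -
    have "real (jm m) \<le> y m" using jmr of_int_floor_le[of "y m"] by simp
    hence "T * real (jm m) \<le> T * y m" using T by simp
    thus ?thesis unfolding tau_def y_def using T by (simp add: field_simps)
  qed
  have lo: "t - T * (1/2)^m \<le> tau T m (jm m)" for m
  proof -
    have "y m < real (jm m) + 1" using jmr real_of_int_floor_add_one_gt[of "y m"] by simp
    hence "T * y m \<le> T * (real (jm m) + 1)" using T by simp
    hence "t * 2^m \<le> T * real (jm m) + T" unfolding y_def using T by (simp add: field_simps)
    hence "t \<le> (T * real (jm m) + T) / 2^m" by (simp add: field_simps)
    moreover have "(T * real (jm m) + T) / 2^m = T * real (jm m) / 2^m + T * (1/2)^m"
      by (simp add: add_divide_distrib power_one_over)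
    ultimately show ?thesis unfolding tau_def by linarith
  qed
  have "(\<lambda>m. t - T * (1/2)^m) \<longlonglongrightarrow> t - T * 0"
    by (intro tendsto_diff tendsto_const tendsto_mult LIMSEQ_power_zero) simp
  hence low: "(\<lambda>m. t - T * (1/2)^m) \<longlonglongrightarrow> t" by simp
  have L: "(\<lambda>m. tau T m (jm m)) \<longlonglongrightarrow> t"
    by (rule tendsto_sandwich[OF always_eventually always_eventually low tendsto_const]) (use lo up in blast)+
  have pos: "tau T m (jm m) \<in> {0..}" for m unfolding tau_def using T by simp
  have "(\<lambda>m. B (tau T m (jm m)) \<omega>) \<longlonglongrightarrow> B t \<omega>"
    by (rule continuous_on_tendsto_compose[OF c L]) (use t pos in \<open>simp_all add: always_eventually\<close>)
  hence "(\<lambda>m. \<bar>B (tau T m (jm m)) \<omega>\<bar>) \<longlonglongrightarrow> \<bar>B t \<omega>\<bar>" by (rule tendsto_rabs)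
  moreover have "\<bar>B (tau T m (jm m)) \<omega>\<bar> \<le> R" for m using dyadic[of B \<omega> "jm m" m T, OF B0 jle[of m]] R[of m] by linarith
  ultimately show ?thesis by (intro LIMSEQ_le_const2) blast+
qed



lemma BM_facts:
  assumes "std_BM M B"
  shows "prob_space M" "\<And>t. t \<ge> 0 \<Longrightarrow> B t \<in> borel_measurable M"
    "\<And>\<omega>. \<omega> \<in> space M \<Longrightarrow> B 0 \<omega> = 0" "\<And>\<omega>. \<omega> \<in> space M \<Longrightarrow> continuous_on {0..} (\<lambda>t. B t \<omega>)"
  using assms unfolding std_BM_def by blast+

lemma tau_nn: "T \<ge> 0 \<Longrightarrow> tau T k j \<ge> 0" unfolding tau_def by simp

lemma Dl_meas: assumes "std_BM M B" "T \<ge> 0" shows "Dl B T k j \<in> borel_measurable M"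
proof -
  have "(\<lambda>\<omega>. B (tau T k (Suc j)) \<omega> - B (tau T k j) \<omega>) \<in> borel_measurable M"
    by (intro borel_measurable_diff BM_facts(2)[OF assms(1)] tau_nn assms(2))
  thus ?thesis unfolding Dl_def[abs_def] by simp
qed

lemma Mk_meas: assumes "std_BM M B" "T \<ge> 0" shows "Mk B T k \<in> borel_measurable M"
proof -
  have "(\<lambda>\<omega>. sqrt (sqrt (\<Sum>j<2^k. (Dl B T k j \<omega>)^4))) \<in> borel_measurable M"
    using Dl_meas[OF assms] by measurable
  thus ?thesis unfolding Mk_def[abs_def] by simp
qed

lemma Mk_sq_int:
  assumes BM: "std_BM M B" and T: "T > 0"
  shows "(\<integral>\<^sup>+ \<omega>. ennreal ((Mk B T k \<omega>)^2) \<partial>M) \<le> ennreal (2 * T * (3/4)^k)"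
proof -
  interpret prob_space M by (rule BM_facts(1)[OF BM])
  define S where "S \<omega> = (\<Sum>j<2^k. (Dl B T k j \<omega>)^4)" for \<omega>
  define l where "l = T * (3/4)^k"
  have lp: "l > 0" unfolding l_def using T by simp
  have Snn: "S \<omega> \<ge> 0" for \<omega> unfolding S_def by (intro sum_nonneg) simp
  have Smeas: "S \<in> borel_measurable M" unfolding S_def[abs_def]
    by (intro borel_measurable_sum borel_measurable_power Dl_meas[OF BM]) (use T in simp)
  have pw: "ennreal ((Mk B T k \<omega>)^2) \<le> ennreal (l / 2) + ennreal (1 / (2 * l)) * ennreal (S \<omega>)" for \<omega>
  proof -
    have "(Mk B T k \<omega>)^2 = sqrt (S \<omega>)" unfolding Mk_def S_def[symmetric] using Snn[of \<omega>] by simp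
    moreover have "sqrt (S \<omega>) \<le> l / 2 + 1 / (2 * l) * S \<omega>"
    proof -
      have "0 \<le> (sqrt (S \<omega>) - l)^2" by simp
      hence "2 * l * sqrt (S \<omega>) \<le> S \<omega> + l^2" using Snn[of \<omega>] by (simp add: power2_eq_square algebra_simps)
      thus ?thesis using lp by (simp add: field_simps power2_eq_square)
    qed
    ultimately have "ennreal ((Mk B T k \<omega>)^2) \<le> ennreal (l / 2 + 1 / (2 * l) * S \<omega>)" by (simp add: ennreal_leI)
    also have "\<dots> = ennreal (l / 2) + ennreal (1 / (2 * l) * S \<omega>)"
      by (rule ennreal_plus) (use lp Snn[of \<omega>] in auto)
    also have "ennreal (1 / (2 * l) * S \<omega>) = ennreal (1 / (2 * l)) * ennreal (S \<omega>)"
      by (rule ennreal_mult) (use lp Snn[of \<omega>] in auto)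
    finally show ?thesis .
  qed
  have ES: "(\<integral>\<^sup>+ \<omega>. ennreal (S \<omega>) \<partial>M) = ennreal (real (2^k) * (3 * (T / 2^k)^2))"
  proof -
    have "(\<integral>\<^sup>+ \<omega>. ennreal (S \<omega>) \<partial>M) = (\<integral>\<^sup>+ \<omega>. (\<Sum>j<2^k. ennreal ((Dl B T k j \<omega>)^4)) \<partial>M)"
      unfolding S_def by (rule nn_integral_cong) (simp add: sum_ennreal)
    also have "\<dots> = (\<Sum>j<2^k. \<integral>\<^sup>+ \<omega>. ennreal ((Dl B T k j \<omega>)^4) \<partial>M)"
      by (rule nn_integral_sum) (intro measurable_compose[OF _ measurable_ennreal] borel_measurable_power Dl_meas[OF BM], use T in simp)
    also have "\<dots> = (\<Sum>j<(2::nat)^k. ennreal (3 * (T / 2^k)^2))"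
    proof (rule sum.cong[OF refl])
      fix j :: nat
      have "tau T k j < tau T k (Suc j)" unfolding tau_def using T by (simp add: field_simps)
      hence "(\<integral>\<^sup>+ \<omega>. ennreal ((B (tau T k (Suc j)) \<omega> - B (tau T k j) \<omega>)^4) \<partial>M) = ennreal (3 * (tau T k (Suc j) - tau T k j)^2)"
        by (intro fourth_moment[OF BM] tau_nn) (use T in simp_all)
      moreover have "tau T k (Suc j) - tau T k j = T / 2^k" unfolding tau_def by (simp add: field_simps)
      ultimately show "(\<integral>\<^sup>+ \<omega>. ennreal ((Dl B T k j \<omega>)^4) \<partial>M) = ennreal (3 * (T / 2^k)^2)"
        unfolding Dl_def by simp
    qed
    also have "\<dots> = ennreal (real (2^k) * (3 * (T / 2^k)^2))"
      by (simp add: ennreal_of_nat_eq_real_of_nat ennreal_mult)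
    finally show ?thesis .
  qed
  have "(\<integral>\<^sup>+ \<omega>. ennreal ((Mk B T k \<omega>)^2) \<partial>M) \<le> (\<integral>\<^sup>+ \<omega>. ennreal (l / 2) + ennreal (1 / (2 * l)) * ennreal (S \<omega>) \<partial>M)"
    by (rule nn_integral_mono) (rule pw)
  also have "\<dots> = ennreal (l / 2) + ennreal (1 / (2 * l)) * (\<integral>\<^sup>+ \<omega>. ennreal (S \<omega>) \<partial>M)"
    using Smeas by (simp add: nn_integral_add nn_integral_cmult emeasure_space_1)
  also have "\<dots> = ennreal (l / 2 + 1 / (2 * l) * (real (2^k) * (3 * (T / 2^k)^2)))"
  proof -
    have eq1: "ennreal (1 / (2 * l)) * (\<integral>\<^sup>+ \<omega>. ennreal (S \<omega>) \<partial>M) = ennreal (1 / (2 * l) * (real (2^k) * (3 * (T / 2^k)^2)))"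
      unfolding ES by (rule ennreal_mult[symmetric]) (use lp in auto)
    show ?thesis unfolding eq1 by (rule ennreal_plus[symmetric]) (use lp in auto)
  qed
  also have "\<dots> \<le> ennreal (2 * T * (3/4)^k)"
  proof (rule ennreal_leI)
    define c :: real where "c = 2^k"
    define q :: real where "q = (3/4)^k"
    have cp: "c > 0" and qp: "q > 0" unfolding c_def q_def by simp_all
    have "q^2 * c = (9/8)^k"
    proof -
      have "q^2 = ((3/4::real)^2)^k" unfolding q_def by (simp flip: power_mult add: mult.commute)
      hence "q^2 * c = ((3/4::real)^2 * 2)^k" unfolding c_def by (simp add: power_mult_distrib)
      thus ?thesis by (simp add: power2_eq_square)
    qed
    hence qc: "q^2 * c \<ge> 1" by simp
    have "1 / (2 * l) * (real (2^k) * (3 * (T / 2^k)^2)) = 3 * T / (2 * q * c)"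
      unfolding l_def q_def[symmetric] c_def[symmetric] using T cp qp
      by (simp add: c_def field_simps power2_eq_square)
    also have "\<dots> \<le> 3 * T * q / 2"
    proof -
      have "3 * T * 1 \<le> 3 * T * (q^2 * c)" using qc T by (intro mult_left_mono) auto
      thus ?thesis using cp qp by (simp add: field_simps power2_eq_square)
    qed
    finally have "1 / (2 * l) * (real (2^k) * (3 * (T / 2^k)^2)) \<le> 3 * T * q / 2" .
    thus "l / 2 + 1 / (2 * l) * (real (2^k) * (3 * (T / 2^k)^2)) \<le> 2 * T * (3/4)^k"
      unfolding l_def q_def[symmetric] by simp
  qed
  finally show ?thesis .
qed



lemma BM_sup:
  assumes BM: "std_BM M B" and T0: "T \<ge> 0"
  shows "\<exists>Z. Z \<in> borel_measurable M \<and> integral\<^sup>N M Z < \<infinity> \<and>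
            (\<forall>\<omega>\<in>space M. \<forall>t\<in>{0..T}. ennreal ((B t \<omega>)^2) \<le> Z \<omega>)"
proof (cases "T = 0")
  case True
  show ?thesis
    by (intro exI[of _ "\<lambda>_. 0"] conjI ballI) (use True BM_facts(3)[OF BM] in auto)
next
  case False
  hence T: "T > 0" using T0 by simp
  define p where "p = sqrt (9/10::real)"
  have p: "0 \<le> p" "p < 1" unfolding p_def by simp_all
  define W where "W = 1 / (1 - p)"
  have Wp: "W > 0" unfolding W_def using p by simp
  have gs: "summable (\<lambda>k. p^k)" by (rule summable_geometric) (use p in simp)
  have gW: "(\<Sum>k. p^k) = W" unfolding W_def by (rule suminf_geometric) (use p in simp)
  define Q where "Q \<omega> = (\<Sum>k. ennreal ((Mk B T k \<omega>)^2 * (10/9)^k))" for \<omega>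
  define Z where "Z \<omega> = ennreal (W^2) * Q \<omega>" for \<omega>
  have Mm: "Mk B T k \<in> borel_measurable M" for k by (rule Mk_meas[OF BM T0])
  have tm: "(\<lambda>\<omega>. ennreal ((Mk B T k \<omega>)^2 * (10/9)^k)) \<in> borel_measurable M" for k
    using Mm[of k] by measurable
  have Qm: "Q \<in> borel_measurable M" unfolding Q_def[abs_def] by (rule borel_measurable_suminf_order) (rule tm)
  have Zm: "Z \<in> borel_measurable M" unfolding Z_def[abs_def] using Qm by measurable
  have EQ: "integral\<^sup>N M Q < \<infinity>"
  proof -
    have "integral\<^sup>N M Q = (\<Sum>k. \<integral>\<^sup>+ \<omega>. ennreal ((Mk B T k \<omega>)^2 * (10/9)^k) \<partial>M)"
      unfolding Q_def by (rule nn_integral_suminf[OF tm])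
    also have "\<dots> \<le> (\<Sum>k. ennreal (2 * T * (5/6)^k))"
    proof (rule suminf_le[OF _ summableI summableI])
      fix k
      have "(\<integral>\<^sup>+ \<omega>. ennreal ((Mk B T k \<omega>)^2 * (10/9)^k) \<partial>M) = (\<integral>\<^sup>+ \<omega>. ennreal ((Mk B T k \<omega>)^2) * ennreal ((10/9)^k) \<partial>M)"
        by (rule nn_integral_cong) (simp add: ennreal_mult)
      also have "\<dots> = (\<integral>\<^sup>+ \<omega>. ennreal ((Mk B T k \<omega>)^2) \<partial>M) * ennreal ((10/9)^k)"
        by (rule nn_integral_multc) (use Mm[of k] in measurable)
      also have "\<dots> \<le> ennreal (2 * T * (3/4)^k) * ennreal ((10/9)^k)"
        by (intro mult_right_mono Mk_sq_int[OF BM T]) simp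
      also have "\<dots> = ennreal (2 * T * (5/6)^k)"
      proof -
        have "2 * T * (3/4)^k * (10/9)^k = 2 * T * (5/6::real)^k"
          by (simp add: mult.assoc power_mult_distrib[symmetric])
        thus ?thesis using T by (simp add: ennreal_mult[symmetric])
      qed
      finally show "(\<integral>\<^sup>+ \<omega>. ennreal ((Mk B T k \<omega>)^2 * (10/9)^k) \<partial>M) \<le> ennreal (2 * T * (5/6)^k)" .
    qed
    also have "\<dots> = ennreal (\<Sum>k. 2 * T * (5/6)^k)"
      by (rule suminf_ennreal2) (use T in \<open>auto intro: summable_mult summable_geometric\<close>)
    also have "\<dots> < \<infinity>" by simp
    finally show ?thesis .
  qed
  have EZ: "integral\<^sup>N M Z < \<infinity>"
    unfolding Z_def using nn_integral_cmult[OF Qm, of "ennreal (W^2)"] EQ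
    by (simp add: ennreal_mult_less_top)
  have pw: "ennreal ((B t \<omega>)^2) \<le> Z \<omega>" if \<omega>: "\<omega> \<in> space M" and t: "t \<in> {0..T}" for \<omega> t
  proof (cases "Q \<omega> = \<top>")
    case True
    thus ?thesis unfolding Z_def using Wp by (simp add: ennreal_mult_top)
  next
    case False
    define q where "q = enn2real (Q \<omega>)"
    have q0: "q \<ge> 0" unfolding q_def by simp
    have Qq: "Q \<omega> = ennreal q" unfolding q_def using False by (simp add: less_top)
    have Mb: "Mk B T k \<omega> \<le> sqrt q * p^k" for k
    proof -
      have "ennreal ((Mk B T k \<omega>)^2 * (10/9)^k) \<le> Q \<omega>"
      proof (rule ccontr)
        assume "\<not> ennreal ((Mk B T k \<omega>)^2 * (10/9)^k) \<le> Q \<omega>"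
        hence "Q \<omega> < ennreal ((Mk B T k \<omega>)^2 * (10/9)^k)" by simp
        hence "ennreal ((Mk B T k \<omega>)^2 * (10/9)^k) < ennreal ((Mk B T k \<omega>)^2 * (10/9)^k)"
          unfolding Q_def by (rule ennreal_suminf_lessD)
        thus False by simp
      qed
      hence "(Mk B T k \<omega>)^2 * (10/9)^k \<le> q" unfolding Qq using q0 by (simp add: ennreal_le_iff)
      hence "(Mk B T k \<omega>)^2 \<le> q * (9/10)^k"
        by (simp add: field_simps power_divide)
      hence "sqrt ((Mk B T k \<omega>)^2) \<le> sqrt (q * (9/10)^k)" by (rule real_sqrt_le_mono)
      thus ?thesis using Mk_nn[of B T k \<omega>] unfolding p_def by (simp add: real_sqrt_mult real_sqrt_power)
    qed
    have R: "(\<Sum>k\<le>m. Mk B T k \<omega>) \<le> sqrt q * W" for m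
    proof -
      have "(\<Sum>k\<le>m. Mk B T k \<omega>) \<le> (\<Sum>k\<le>m. sqrt q * p^k)" by (rule sum_mono) (rule Mb)
      also have "\<dots> = sqrt q * (\<Sum>k\<le>m. p^k)" by (simp add: sum_distrib_left)
      also have "(\<Sum>k\<le>m. p^k) \<le> W" unfolding gW[symmetric] by (rule sum_le_suminf[OF gs]) (use p in auto)
      hence "sqrt q * (\<Sum>k\<le>m. p^k) \<le> sqrt q * W" using q0 by (intro mult_left_mono) auto
      finally show ?thesis .
    qed
    have "\<bar>B t \<omega>\<bar> \<le> sqrt q * W"
      by (rule cont_bound[OF BM_facts(3)[OF BM \<omega>] BM_facts(4)[OF BM \<omega>] T t R])
    hence "\<bar>B t \<omega>\<bar>^2 \<le> (sqrt q * W)^2" by (intro power_mono) auto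
    hence "(B t \<omega>)^2 \<le> W^2 * q" using q0 by (simp add: power_mult_distrib mult.commute)
    hence "ennreal ((B t \<omega>)^2) \<le> ennreal (W^2 * q)" by (rule ennreal_leI)
    also have "\<dots> = Z \<omega>" unfolding Z_def Qq using q0 by (simp add: ennreal_mult)
    finally show ?thesis .
  qed
  show ?thesis using Zm EZ pw by blast
qed



context sysp begin

definition "CC T = 2 * (\<bar>x0\<bar> + K0 * (1 + T) * T)^2 + (\<Sum>n. 2 * (u0 n)^2 + 2 * (e4 n * T^2))
   + (\<Sum>n. 2 * (v0 n)^2 + 2 * (e4 n * T^2))"

lemma Hnorm_sq_bnd:
  assumes bc: "\<And>T. continuous_on {0..T} b" and T: "T \<ge> 0" and t: "t \<in> {0..T}"
  shows "(Hnorm (Sol (Xs b) t))^2 \<le> CC T + 2 * (b t)^2"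
proof -
  define X where "X = Xs b"
  have t0: "t \<ge> 0" and tT: "t \<le> T" using t by auto
  have XC: "\<And>T. continuous_on {0..T} X" unfolding X_def by (rule Xs_cont[OF bc])
  have eqX: "X t = x0 + b t + integral {0..t} (G X)"
    using integral_unique[OF Xs_fix[OF bc t0]] unfolding X_def by simp
  have "norm (integral {0..t} (G X)) \<le> K0 * (1 + T) * (t - 0)"
  proof (rule integral_bound)
    show "continuous_on {0..t} (G X)" by (rule G_cont[OF t0 XC])
    fix s assume s: "s \<in> {0..t}"
    have "\<bar>G X s\<bar> \<le> K0 * (1 + s)" by (rule G_bnd) (use s XC in auto)
    also have "\<dots> \<le> K0 * (1 + T)" using s tT K0_pos by (intro mult_left_mono) auto
    finally show "norm (G X s) \<le> K0 * (1 + T)" by simp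
  qed (use t0 in auto)
  also have "K0 * (1 + T) * (t - 0) \<le> K0 * (1 + T) * T" using tT t0 K0_pos T by (intro mult_left_mono) auto
  finally have I: "\<bar>integral {0..t} (G X)\<bar> \<le> K0 * (1 + T) * T" by simp
  define A where "A = \<bar>x0\<bar> + K0 * (1 + T) * T"
  have "\<bar>X t\<bar> \<le> A + \<bar>b t\<bar>" unfolding eqX A_def using I by linarith
  hence "\<bar>X t\<bar>^2 \<le> (A + \<bar>b t\<bar>)^2" by (intro power_mono) auto
  also have "\<dots> \<le> 2 * A^2 + 2 * (b t)^2"
    using zero_le_power2[of "A - \<bar>b t\<bar>"] by (simp add: power2_eq_square algebra_simps)
  finally have X2: "(X t)^2 \<le> 2 * A^2 + 2 * (b t)^2" by simp
  have bnd: "(Wc c g X t n)^2 \<le> 2 * (c n)^2 + 2 * (e4 n * T^2)"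
    if "continuous_on UNIV g" "\<And>z. \<bar>g z\<bar> \<le> 1" for c g n
  proof -
    have "t^2 \<le> T^2" using t by (intro power_mono) auto
    hence "e4 n * t^2 \<le> e4 n * T^2" using e4_nn by (intro mult_left_mono) auto
    thus ?thesis using W_sq[OF t0 XC that, of c n] by linarith
  qed
  have su: "summable (\<lambda>n. 2 * (u0 n)^2 + 2 * (e4 n * T^2))"
    by (intro summable_add summable_mult usum summable_mult2 e4_sum)
  have sv: "summable (\<lambda>n. 2 * (v0 n)^2 + 2 * (e4 n * T^2))"
    by (intro summable_add summable_mult vsum summable_mult2 e4_sum)
  have S1: "(\<Sum>n. (Wc u0 cos X t n)^2) \<le> (\<Sum>n. 2 * (u0 n)^2 + 2 * (e4 n * T^2))"
    by (rule suminf_le[OF bnd[OF gcos] W_summable[OF t0 XC usum gcos] su])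
  have S2: "(\<Sum>n. (Wc v0 (\<lambda>z. - sin z) X t n)^2) \<le> (\<Sum>n. 2 * (v0 n)^2 + 2 * (e4 n * T^2))"
    by (rule suminf_le[OF bnd[OF gsin] W_summable[OF t0 XC vsum gsin] sv])
  have N1: "0 \<le> (\<Sum>n. (Wc u0 cos X t n)^2)" by (rule suminf_nonneg[OF W_summable[OF t0 XC usum gcos]]) simp
  have N2: "0 \<le> (\<Sum>n. (Wc v0 (\<lambda>z. - sin z) X t n)^2)" by (rule suminf_nonneg[OF W_summable[OF t0 XC vsum gsin]]) simp
  have "(Hnorm (Sol X t))^2 = (X t)^2 + (\<Sum>n. (Wc u0 cos X t n)^2) + (\<Sum>n. (Wc v0 (\<lambda>z. - sin z) X t n)^2)"
    unfolding Hnorm_def Sol_def using N1 N2 by simp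
  also have "\<dots> \<le> CC T + 2 * (b t)^2" unfolding CC_def A_def[symmetric] using X2 S1 S2 by linarith
  finally show ?thesis unfolding X_def .
qed

end

theorem proposition1:
  fixes a :: "nat \<Rightarrow> real" and M :: "'w measure" and B :: "real \<Rightarrow> 'w \<Rightarrow> real" and y :: Hpt
  assumes "\<forall>n\<ge>1. a n > 0"
    and "summable (\<lambda>n. (1 + (real n)^2)^5 * (a n)^2)"
    and "std_BM M B"
    and "inH y"
  shows "\<exists>Y :: real \<Rightarrow> 'w \<Rightarrow> Hpt.
           H_adapted M B Y
         \<and> (AE \<omega> in M. is_solution a (\<lambda>t. B t \<omega>) y (\<lambda>t. Y t \<omega>))
         \<and> (\<forall>Z :: real \<Rightarrow> 'w \<Rightarrow> Hpt.
               (AE \<omega> in M. is_solution a (\<lambda>t. B t \<omega>) y (\<lambda>t. Z t \<omega>))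
               \<longrightarrow> (AE \<omega> in M. \<forall>t\<ge>0. Z t \<omega> = Y t \<omega>))
         \<and> (\<forall>T::real. (\<integral>\<^sup>+\<omega>. (SUP t\<in>{0..T}. ennreal ((Hnorm (Y t \<omega>))^2)) \<partial>M) < \<infinity>)"
proof -
  obtain x0 u0 v0 where y: "y = (x0, u0, v0)" by (cases y) auto
  note BM = assms(3)
  interpret sysp a x0 u0 v0
  proof
    show "\<forall>n\<ge>1. a n > 0" by (rule assms(1))
    show "summable (\<lambda>n. (1 + (real n)^2)^5 * (a n)^2)" by (rule assms(2))
  qed (use assms(4) in \<open>simp_all add: y inH_def\<close>)
  interpret prob_space M by (rule BM_facts(1)[OF BM])
  define Y where "Y t \<omega> = Sol (Xs (\<lambda>s. B s \<omega>)) t" for t \<omega>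
  have pc: "continuous_on {0..T} (\<lambda>s. B s \<omega>)" if "\<omega> \<in> space M" for \<omega> T
    by (rule continuous_on_subset[OF BM_facts(4)[OF BM that]]) auto
  have sol: "is_solution a (\<lambda>t. B t \<omega>) y (\<lambda>t. Y t \<omega>)" if "\<omega> \<in> space M" for \<omega>
    unfolding Y_def y using Sol_is_solution[of "\<lambda>s. B s \<omega>"] pc[OF that] by simp
  have AEsol: "AE \<omega> in M. is_solution a (\<lambda>t. B t \<omega>) y (\<lambda>t. Y t \<omega>)"
    by (rule AE_I2) (rule sol)
  have uniq: "(AE \<omega> in M. \<forall>t\<ge>0. Z t \<omega> = Y t \<omega>)"
    if "AE \<omega> in M. is_solution a (\<lambda>t. B t \<omega>) y (\<lambda>t. Z t \<omega>)" for Z :: "real \<Rightarrow> 'w \<Rightarrow> Hpt"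
    using that AEsol
  proof (eventually_elim)
    case (elim \<omega>)
    show "\<forall>t\<ge>0. Z t \<omega> = Y t \<omega>"
      using sol_unique[of "\<lambda>t. B t \<omega>" "\<lambda>t. Z t \<omega>" "\<lambda>t. Y t \<omega>"] elim unfolding y by blast
  qed
  have fin: "(\<integral>\<^sup>+\<omega>. (SUP t\<in>{0..T}. ennreal ((Hnorm (Y t \<omega>))^2)) \<partial>M) < \<infinity>" for T :: real
  proof (cases "T \<ge> 0")
    case False
    thus ?thesis by (simp add: bot_ennreal)
  next
    case True
    obtain Zb where Zm: "Zb \<in> borel_measurable M" and Zi: "integral\<^sup>N M Zb < \<infinity>"
      and Zp: "\<And>\<omega> t. \<omega> \<in> space M \<Longrightarrow> t \<in> {0..T} \<Longrightarrow> ennreal ((B t \<omega>)^2) \<le> Zb \<omega>"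
      using BM_sup[OF BM True] by blast
    have CC0: "CC T \<ge> 0"
    proof -
      have "(\<Sum>n. 2 * (u0 n)^2 + 2 * (e4 n * T^2)) \<ge> 0"
        by (rule suminf_nonneg) (intro summable_add summable_mult usum summable_mult2 e4_sum, use e4_nn in simp)
      moreover have "(\<Sum>n. 2 * (v0 n)^2 + 2 * (e4 n * T^2)) \<ge> 0"
        by (rule suminf_nonneg) (intro summable_add summable_mult vsum summable_mult2 e4_sum, use e4_nn in simp)
      ultimately show ?thesis unfolding CC_def by simp
    qed
    have "(\<integral>\<^sup>+\<omega>. (SUP t\<in>{0..T}. ennreal ((Hnorm (Y t \<omega>))^2)) \<partial>M) \<le> (\<integral>\<^sup>+\<omega>. ennreal (CC T) + 2 * Zb \<omega> \<partial>M)"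
    proof (rule nn_integral_mono)
      fix \<omega> assume \<omega>: "\<omega> \<in> space M"
      show "(SUP t\<in>{0..T}. ennreal ((Hnorm (Y t \<omega>))^2)) \<le> ennreal (CC T) + 2 * Zb \<omega>"
      proof (rule SUP_least)
        fix t assume t: "t \<in> {0..T}"
        have "(Hnorm (Y t \<omega>))^2 \<le> CC T + 2 * (B t \<omega>)^2"
          unfolding Y_def by (rule Hnorm_sq_bnd[OF pc[OF \<omega>] True t])
        hence "ennreal ((Hnorm (Y t \<omega>))^2) \<le> ennreal (CC T + 2 * (B t \<omega>)^2)" by (rule ennreal_leI)
        also have "\<dots> = ennreal (CC T) + 2 * ennreal ((B t \<omega>)^2)"
          using CC0 by (simp add: ennreal_plus ennreal_mult)
        also have "\<dots> \<le> ennreal (CC T) + 2 * Zb \<omega>"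
          by (intro add_left_mono mult_left_mono Zp[OF \<omega> t]) simp
        finally show "ennreal ((Hnorm (Y t \<omega>))^2) \<le> ennreal (CC T) + 2 * Zb \<omega>" .
      qed
    qed
    also have "\<dots> = ennreal (CC T) + 2 * integral\<^sup>N M Zb"
      using Zm by (simp add: nn_integral_add nn_integral_cmult emeasure_space_1)
    also have "\<dots> < \<infinity>" using Zi by (simp add: ennreal_mult_less_top)
    finally show ?thesis .
  qed
  show ?thesis
    by (intro exI[of _ Y] conjI allI impI adapted[OF BM, folded Y_def] AEsol uniq fin)
qed


end
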